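(* Let $K$ be a countable algebraically closed field, let $k\geq0$ be an integer, let $Q$ be the cyclic quiver with vertices $0,1,\dots,k$ and arrows $a_i:i\to i+1$ for $i<k$ and $a_k:k\to0$, and let $M_{\omega_1}$ be the $KQ$-module defined in the context. Then $\mathsf{UP}$ implies $\mathrm{Ext}^1_{KQ}(M_{\omega_1},KQ)=0$. In particular, under $\mathsf{UP}$ it is not true that every $KQ$-module $M$ with $\mathrm{Ext}^n_{KQ}(M,KQ)=0$ for all $n\ge1$ is projective.
   Context: Paths in a quiver are composable sequences of arrows written left to right, with trivial paths $e_v$; the path algebra $KQ$ has basis all paths, product = concatenation when the target of the first equals the source of the second, else $0$. Modules are right modules; projective means every epimorphism onto it splits. $\omega_1$ is the first uncountable ordinal, $\mathrm{Lim}$ the class of nonzero limit ordinals. Fix a ladder system: for each $\alpha\in\omega_1\cap\mathrm{Lim}$ a set $C_\alpha=\{\zeta^\alpha_n:n\in\omega\}$, strictly increasingly enumerated and cofinal in $\alpha$, such that each $\zeta^\alpha_n$ equals $\delta+n+1$ for some $\delta\in\alpha\cap(\{0\}\cup\mathrm{Lim})$. For $\xi<\omega_1$ let $F^\xi=KQ$ if $\xi\notin\mathrm{Lim}$ and $F^\xi=\bigoplus_{n\in\omega}KQ$ if $\xi\in\mathrm{Lim}$; let $F=\bigoplus_{\xi<\omega_1}F^\xi$ (finite-support functions, coordinatewise operations). For $\gamma\in\omega_1\setminus\mathrm{Lim}$, $e^\gamma_0\in F$ has support $\{\gamma\}$ and value $e_0$ there; for $\alpha\in\mathrm{Lim}$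 and $n\in\omega$, $e^{\alpha,n}_0\in F$ has support $\{\alpha\}$ and value at $\alpha$ the element of $\bigoplus_{m}KQ$ with support $\{n\}$ and value $e_0$. Let $G_\alpha$ be the $KQ$-submodule of $F$ generated by $\{e^{\zeta^\alpha_n}_0-e^{\alpha,n}_0+e^{\alpha,n+1}_0a_0a_1\cdots a_k:n\in\omega\}$, let $I=\sum_{\alpha\in\omega_1\cap\mathrm{Lim}}G_\alpha$, and let $M_{\omega_1}$ be the $KQ$-submodule of $F/I$ generated by $\{e^\gamma_0+I:\gamma\in\omega_1\setminus\mathrm{Lim}\}\cup\{e^{\alpha,n}_0+I:\alpha\in\omega_1\cap\mathrm{Lim},n\in\omega\}$. $\mathsf{UP}$: for any sequence $\langle X_\beta:\beta<\omega_1\rangle$ of countable sets and any ladder system $\langle C_\alpha\rangle$ (each $C_\alpha=\{\zeta^\alpha_n\}$ cofinal in $\alpha$ of order type $\omega$) with functions $d_\alpha$ on $C_\alpha$ satisfying $d_\alpha(\zeta^\alpha_n)\in X_{\zeta^\alpha_n}$, there is a function $f$ on $\omega_1$ such that for each $\alpha$, $f(\zeta^\alpha_n)=d_\alpha(\zeta^\alpha_n)$ for all but finitely many $n$. *)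

theory Defs
  imports "HOL-Algebra.Ring" "HOL-Computational_Algebra.Polynomial" "HOL-Library.Countable_Set"
begin

section \<open>omega_1, modelled as a well-ordered type of order type omega_1\<close>

definition omega1_type :: "'w::wellorder itself \<Rightarrow> bool" where
  "omega1_type _ \<longleftrightarrow> uncountable (UNIV :: 'w set) \<and> (\<forall>x::'w. countable {y. y < x})"

definition is_zero :: "'w::wellorder \<Rightarrow> bool" where
  "is_zero \<delta> \<longleftrightarrow> \<not> (\<exists>\<beta>. \<beta> < \<delta>)"

definition is_lim :: "'w::wellorder \<Rightarrow> bool" where
  "is_lim \<alpha> \<longleftrightarrow> (\<exists>\<beta>. \<beta> < \<alpha>) \<and> (\<forall>\<beta><\<alpha>. \<exists>\<gamma>. \<beta> < \<gamma> \<and> \<gamma> < \<alpha>)"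

definition osucc :: "'w::wellorder \<Rightarrow> 'w" where
  "osucc x = (LEAST y. x < y)"

definition ladder_system :: "('w::wellorder \<Rightarrow> nat \<Rightarrow> 'w) \<Rightarrow> bool" where
  "ladder_system \<zeta> \<longleftrightarrow> (\<forall>\<alpha>. is_lim \<alpha> \<longrightarrow>
      strict_mono (\<zeta> \<alpha>) \<and> (\<forall>n. \<zeta> \<alpha> n < \<alpha>) \<and> (\<forall>\<beta><\<alpha>. \<exists>n. \<beta> \<le> \<zeta> \<alpha> n))"

definition good_ladder :: "('w::wellorder \<Rightarrow> nat \<Rightarrow> 'w) \<Rightarrow> bool" where
  "good_ladder \<zeta> \<longleftrightarrow> ladder_system \<zeta> \<and> (\<forall>\<alpha> n. is_lim \<alpha> \<longrightarrow>
      (\<exists>\<delta><\<alpha>. (is_zero \<delta> \<or> is_lim \<delta>) \<and> \<zeta> \<alpha> n = (osucc ^^ Suc n) \<delta>))"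

text \<open>Uniformization principle UP.  Countable sets are represented as subsets of nat
(every countable set injects into nat, so this is equivalent).\<close>
definition UP :: "'w::wellorder itself \<Rightarrow> bool" where
  "UP _ \<longleftrightarrow> (\<forall>(X::'w \<Rightarrow> nat set) (\<zeta>::'w \<Rightarrow> nat \<Rightarrow> 'w) (d::'w \<Rightarrow> nat \<Rightarrow> nat).
      ladder_system \<zeta> \<and> (\<forall>\<alpha> n. is_lim \<alpha> \<longrightarrow> d \<alpha> n \<in> X (\<zeta> \<alpha> n)) \<longrightarrow>
      (\<exists>f::'w \<Rightarrow> nat. \<forall>\<alpha>. is_lim \<alpha> \<longrightarrow> finite {n. f (\<zeta> \<alpha> n) \<noteq> d \<alpha> n}))"

section \<open>The cyclic quiver with vertices 0..k and its path algebra\<close>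

text \<open>A path is (source vertex, list of arrows); arrow a_i is i, from i to i+1 (mod k+1).
The trivial path e_v is (v, []).\<close>
type_synonym path = "nat \<times> nat list"

definition cyc_tgt :: "nat \<Rightarrow> nat \<Rightarrow> nat" where
  "cyc_tgt k i = (if i < k then Suc i else 0)"

definition is_path :: "nat \<Rightarrow> path \<Rightarrow> bool" where
  "is_path k p \<longleftrightarrow> fst p \<le> k \<and> set (snd p) \<subseteq> {..k} \<and>
     (snd p \<noteq> [] \<longrightarrow> hd (snd p) = fst p) \<and>
     (\<forall>i. Suc i < length (snd p) \<longrightarrow> cyc_tgt k (snd p ! i) = snd p ! Suc i)"

definition ptgt :: "nat \<Rightarrow> path \<Rightarrow> nat" where
  "ptgt k p = (if snd p = [] then fst p else cyc_tgt k (last (snd p)))"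

definition kq_carrier :: "nat \<Rightarrow> (path \<Rightarrow> 'k::field) set" where
  "kq_carrier k = {x. finite {p. x p \<noteq> 0} \<and> (\<forall>p. x p \<noteq> 0 \<longrightarrow> is_path k p)}"

definition kq_add :: "(path \<Rightarrow> 'k::field) \<Rightarrow> (path \<Rightarrow> 'k) \<Rightarrow> (path \<Rightarrow> 'k)" where
  "kq_add x y = (\<lambda>p. x p + y p)"

definition kq_mult :: "nat \<Rightarrow> (path \<Rightarrow> 'k::field) \<Rightarrow> (path \<Rightarrow> 'k) \<Rightarrow> (path \<Rightarrow> 'k)" where
  "kq_mult k x y = (\<lambda>p. \<Sum>(q, r) \<in> {(q, r). x q \<noteq> 0 \<and> y r \<noteq> 0 \<and> ptgt k q = fst r \<and>
                                        p = (fst q, snd q @ snd r)}. x q * y r)"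

definition kq_one :: "nat \<Rightarrow> (path \<Rightarrow> 'k::field)" where
  "kq_one k = (\<lambda>p. if fst p \<le> k \<and> snd p = [] then 1 else 0)"

definition KQ :: "nat \<Rightarrow> (path \<Rightarrow> 'k::field) ring" where
  "KQ k = \<lparr>carrier = kq_carrier k, monoid.mult = kq_mult k, monoid.one = kq_one k,
           ring.zero = (\<lambda>_. 0), ring.add = kq_add\<rparr>"

record ('m, 'r) rmod =
  mcarrier :: "'m set"
  madd :: "'m \<Rightarrow> 'm \<Rightarrow> 'm"
  mzero :: 'm
  msmul :: "'m \<Rightarrow> 'r \<Rightarrow> 'm"

definition right_module :: "('r, 'x) ring_scheme \<Rightarrow> ('m, 'r) rmod \<Rightarrow> bool" where
  "right_module R M \<longleftrightarrow>
     mzero M \<in> mcarrier M \<and>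
     (\<forall>x\<in>mcarrier M. \<forall>y\<in>mcarrier M. madd M x y \<in> mcarrier M) \<and>
     (\<forall>x\<in>mcarrier M. \<forall>y\<in>mcarrier M. \<forall>z\<in>mcarrier M.
        madd M (madd M x y) z = madd M x (madd M y z)) \<and>
     (\<forall>x\<in>mcarrier M. \<forall>y\<in>mcarrier M. madd M x y = madd M y x) \<and>
     (\<forall>x\<in>mcarrier M. madd M (mzero M) x = x) \<and>
     (\<forall>x\<in>mcarrier M. \<exists>y\<in>mcarrier M. madd M x y = mzero M) \<and>
     (\<forall>x\<in>mcarrier M. \<forall>r\<in>carrier R. msmul M x r \<in> mcarrier M) \<and>
     (\<forall>x\<in>mcarrier M. \<forall>y\<in>mcarrier M. \<forall>r\<in>carrier R.
        msmul M (madd M x y) r = madd M (msmul M x r) (msmul M y r)) \<and>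
     (\<forall>x\<in>mcarrier M. \<forall>r\<in>carrier R. \<forall>s\<in>carrier R.
        msmul M x (r \<oplus>\<^bsub>R\<^esub> s) = madd M (msmul M x r) (msmul M x s)) \<and>
     (\<forall>x\<in>mcarrier M. \<forall>r\<in>carrier R. \<forall>s\<in>carrier R.
        msmul M x (r \<otimes>\<^bsub>R\<^esub> s) = msmul M (msmul M x r) s) \<and>
     (\<forall>x\<in>mcarrier M. msmul M x \<one>\<^bsub>R\<^esub> = x)"

definition rmod_hom :: "('r, 'x) ring_scheme \<Rightarrow> ('m, 'r) rmod \<Rightarrow> ('n, 'r) rmod \<Rightarrow> ('m \<Rightarrow> 'n) \<Rightarrow> bool" where
  "rmod_hom R M N f \<longleftrightarrow>
     (\<forall>x\<in>mcarrier M. f x \<in> mcarrier N) \<and>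
     (\<forall>x\<in>mcarrier M. \<forall>y\<in>mcarrier M. f (madd M x y) = madd N (f x) (f y)) \<and>
     (\<forall>x\<in>mcarrier M. \<forall>r\<in>carrier R. f (msmul M x r) = msmul N (f x) r)"

text \<open>Ext^1_R(M,N) = 0 (Yoneda): every short exact sequence 0 -> N -> E -> M -> 0 splits.
The middle term E ranges over modules whose elements have type 'e; since 'e is a free
type variable of the theorem, this covers extensions of every size.\<close>
definition ext1_zero :: "'e itself \<Rightarrow> ('r, 'x) ring_scheme \<Rightarrow> ('m, 'r) rmod \<Rightarrow> ('n, 'r) rmod \<Rightarrow> bool" where
  "ext1_zero _ R M N \<longleftrightarrow>
     (\<forall>(E::('e, 'r) rmod) i p.
        right_module R E \<and> rmod_hom R N E i \<and> rmod_hom R E M p \<and>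
        inj_on i (mcarrier N) \<and> p ` mcarrier E = mcarrier M \<and>
        (\<forall>x\<in>mcarrier E. p x = mzero M \<longleftrightarrow> x \<in> i ` mcarrier N)
        \<longrightarrow> (\<exists>s. rmod_hom R M E s \<and> (\<forall>m\<in>mcarrier M. p (s m) = m)))"

definition projective :: "'e itself \<Rightarrow> ('r, 'x) ring_scheme \<Rightarrow> ('m, 'r) rmod \<Rightarrow> bool" where
  "projective _ R M \<longleftrightarrow>
     (\<forall>(E::('e, 'r) rmod) p.
        right_module R E \<and> rmod_hom R E M p \<and> p ` mcarrier E = mcarrier M
        \<longrightarrow> (\<exists>s. rmod_hom R M E s \<and> (\<forall>m\<in>mcarrier M. p (s m) = m)))"

definition is_submodule :: "('r, 'x) ring_scheme \<Rightarrow> ('m, 'r) rmod \<Rightarrow> 'm set \<Rightarrow> bool" where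
  "is_submodule R M N \<longleftrightarrow> N \<subseteq> mcarrier M \<and> mzero M \<in> N \<and>
     (\<forall>x\<in>N. \<forall>y\<in>N. madd M x y \<in> N) \<and> (\<forall>x\<in>N. \<forall>r\<in>carrier R. msmul M x r \<in> N)"

definition gen_submodule :: "('r, 'x) ring_scheme \<Rightarrow> ('m, 'r) rmod \<Rightarrow> 'm set \<Rightarrow> 'm set" where
  "gen_submodule R M S = \<Inter> {N. is_submodule R M N \<and> S \<subseteq> N}"

definition submod :: "('m, 'r) rmod \<Rightarrow> 'm set \<Rightarrow> ('m, 'r) rmod" where
  "submod M N = M\<lparr>mcarrier := N\<rparr>"

definition coset :: "('m, 'r) rmod \<Rightarrow> 'm set \<Rightarrow> 'm \<Rightarrow> 'm set" where
  "coset M N x = {madd M x i | i. i \<in> N}"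

definition quot_mod :: "('m, 'r) rmod \<Rightarrow> 'm set \<Rightarrow> ('m set, 'r) rmod" where
  "quot_mod M N = \<lparr>mcarrier = coset M N ` mcarrier M,
     madd = (\<lambda>A B. coset M N (madd M (SOME a. a \<in> A) (SOME b. b \<in> B))),
     mzero = coset M N (mzero M),
     msmul = (\<lambda>A r. coset M N (msmul M (SOME a. a \<in> A) r))\<rparr>"

definition KQmod :: "nat \<Rightarrow> (path \<Rightarrow> 'k::field, path \<Rightarrow> 'k) rmod" where
  "KQmod k = \<lparr>mcarrier = kq_carrier k, madd = kq_add, mzero = (\<lambda>_. 0), msmul = kq_mult k\<rparr>"

section \<open>The module M_omega1\<close>

text \<open>Elements of F = (+)_{xi<omega1} F^xi: x xi n is the n-th KQ coordinate of the
xi-component; for non-limit xi only coordinate 0 is used (F^xi = KQ).\<close>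
type_synonym ('w, 'k) Fel = "'w \<Rightarrow> nat \<Rightarrow> path \<Rightarrow> 'k"

definition F_carrier :: "nat \<Rightarrow> ('w::wellorder, 'k::field) Fel set" where
  "F_carrier k = {x. finite {(\<xi>, n). x \<xi> n \<noteq> (\<lambda>_. 0)} \<and> (\<forall>\<xi> n. x \<xi> n \<in> kq_carrier k) \<and>
                     (\<forall>\<xi> n. \<not> is_lim \<xi> \<and> n \<noteq> 0 \<longrightarrow> x \<xi> n = (\<lambda>_. 0))}"

definition Fmod :: "nat \<Rightarrow> (('w::wellorder, 'k::field) Fel, path \<Rightarrow> 'k) rmod" where
  "Fmod k = \<lparr>mcarrier = F_carrier k, madd = (\<lambda>x y \<xi> n. kq_add (x \<xi> n) (y \<xi> n)),
             mzero = (\<lambda>_ _ _. 0), msmul = (\<lambda>x r \<xi> n. kq_mult k (x \<xi> n) r)\<rparr>"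

definition Fneg :: "('w, 'k::field) Fel \<Rightarrow> ('w, 'k) Fel" where
  "Fneg x = (\<lambda>\<xi> n p. - x \<xi> n p)"

definition unitv :: "'w \<Rightarrow> nat \<Rightarrow> (path \<Rightarrow> 'k::field) \<Rightarrow> ('w, 'k) Fel" where
  "unitv \<xi> n c = (\<lambda>\<xi>' n'. if \<xi>' = \<xi> \<and> n' = n then c else (\<lambda>_. 0))"

definition kq_e0 :: "path \<Rightarrow> 'k::field" where
  "kq_e0 = (\<lambda>p. if p = (0, []) then 1 else 0)"

definition kq_cycle :: "nat \<Rightarrow> path \<Rightarrow> 'k::field" where
  "kq_cycle k = (\<lambda>p. if p = (0, [0..<Suc k]) then 1 else 0)"

definition e_succ :: "'w \<Rightarrow> ('w, 'k::field) Fel" where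
  "e_succ \<gamma> = unitv \<gamma> 0 kq_e0"

definition e_lim :: "'w \<Rightarrow> nat \<Rightarrow> ('w, 'k::field) Fel" where
  "e_lim \<alpha> n = unitv \<alpha> n kq_e0"

definition ladder_gen :: "nat \<Rightarrow> ('w::wellorder \<Rightarrow> nat \<Rightarrow> 'w) \<Rightarrow> 'w \<Rightarrow> nat \<Rightarrow> ('w, 'k::field) Fel" where
  "ladder_gen k \<zeta> \<alpha> n =
     madd (Fmod k) (madd (Fmod k) (e_succ (\<zeta> \<alpha> n)) (Fneg (e_lim \<alpha> n)))
                   (msmul (Fmod k) (e_lim \<alpha> (Suc n)) (kq_cycle k))"

definition G_sub :: "nat \<Rightarrow> ('w::wellorder \<Rightarrow> nat \<Rightarrow> 'w) \<Rightarrow> 'w \<Rightarrow> ('w, 'k::field) Fel set" where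
  "G_sub k \<zeta> \<alpha> = gen_submodule (KQ k) (Fmod k) (range (ladder_gen k \<zeta> \<alpha>))"

definition I_sub :: "nat \<Rightarrow> ('w::wellorder \<Rightarrow> nat \<Rightarrow> 'w) \<Rightarrow> ('w, 'k::field) Fel set" where
  "I_sub k \<zeta> = gen_submodule (KQ k) (Fmod k) (\<Union>\<alpha>\<in>{\<alpha>. is_lim \<alpha>}. G_sub k \<zeta> \<alpha>)"

definition FI_mod :: "nat \<Rightarrow> ('w::wellorder \<Rightarrow> nat \<Rightarrow> 'w) \<Rightarrow> (('w, 'k::field) Fel set, path \<Rightarrow> 'k) rmod" where
  "FI_mod k \<zeta> = quot_mod (Fmod k) (I_sub k \<zeta>)"

definition M_omega1 :: "nat \<Rightarrow> ('w::wellorder \<Rightarrow> nat \<Rightarrow> 'w) \<Rightarrow> (('w, 'k::field) Fel set, path \<Rightarrow> 'k) rmod" where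
  "M_omega1 k \<zeta> = submod (FI_mod k \<zeta>)
     (gen_submodule (KQ k) (FI_mod k \<zeta>)
        ({coset (Fmod k) (I_sub k \<zeta>) (e_succ \<gamma>) | \<gamma>. \<not> is_lim \<gamma>} \<union>
         {coset (Fmod k) (I_sub k \<zeta>) (e_lim \<alpha> n) | \<alpha> n. is_lim \<alpha>}))"

end

theory Submission
  imports Defs
begin


definition cat :: "path \<Rightarrow> path \<Rightarrow> path" where "cat q r = (fst q, snd q @ snd r)"

lemma kq_carrierD: "X \<in> kq_carrier k \<Longrightarrow> finite {p. X p \<noteq> 0}"
  "X \<in> kq_carrier k \<Longrightarrow> X p \<noteq> 0 \<Longrightarrow> is_path k p"
  unfolding kq_carrier_def by blast+

lemma kq_mult_alt: "kq_mult k X Y p = (\<Sum>(q, r) \<in> {(q, r). X q \<noteq> 0 \<and> Y r \<noteq> 0 \<and> ptgt k q = fst r \<and>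
                                        p = cat q r}. X q * Y r)"
  by (simp add: kq_mult_def cat_def)

lemma kq_mult_sup:
  fixes X Y :: "path \<Rightarrow> 'k::field"
  assumes "finite A" "finite B" "{p. X p \<noteq> 0} \<subseteq> A" "{p. Y p \<noteq> 0} \<subseteq> B"
  shows "kq_mult k X Y p = (\<Sum>q\<in>A. \<Sum>r\<in>B. if ptgt k q = fst r \<and> p = cat q r then X q * Y r else 0)"
proof -
  have "(\<Sum>q\<in>A. \<Sum>r\<in>B. if ptgt k q = fst r \<and> p = cat q r then X q * Y r else 0)
      = (\<Sum>(q,r)\<in>A \<times> B. if ptgt k q = fst r \<and> p = cat q r then X q * Y r else 0)"
    by (simp add: sum.cartesian_product)
  also have "\<dots> = (\<Sum>x\<in>{x\<in>A \<times> B. ptgt k (fst x) = fst (snd x) \<and> p = cat (fst x) (snd x)}. X (fst x) * Y (snd x))"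
    using assms by (simp add: sum.inter_filter split_def)
  also have "\<dots> = (\<Sum>x \<in> {(q, r). X q \<noteq> 0 \<and> Y r \<noteq> 0 \<and> ptgt k q = fst r \<and>
                                        p = cat q r}. X (fst x) * Y (snd x))"
    by (rule sum.mono_neutral_right) (use assms in auto)
  finally show ?thesis by (simp add: kq_mult_alt split_def)
qed

lemma kq_mult_nz:
  assumes "kq_mult k X Y p \<noteq> 0"
  shows "\<exists>q r. X q \<noteq> 0 \<and> Y r \<noteq> 0 \<and> ptgt k q = fst r \<and> p = cat q r"
proof (rule ccontr)
  assume "\<not> ?thesis"
  hence e: "{(q, r). X q \<noteq> 0 \<and> Y r \<noteq> 0 \<and> ptgt k q = fst r \<and> p = cat q r} = {}" by blast
  have "kq_mult k X Y p = 0" unfolding kq_mult_alt e by simp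
  thus False using assms by simp
qed

lemma kq_mult_zero_left[simp]: "kq_mult k (\<lambda>_. 0) Y = (\<lambda>_. 0)"
  by (rule ext) (simp add: kq_mult_def)

lemma kq_mult_zero_right[simp]: "kq_mult k X (\<lambda>_. 0) = (\<lambda>_. 0)"
  by (rule ext) (simp add: kq_mult_def)

lemma kq_mult_right_diag:
  assumes "\<forall>r. Y r \<noteq> 0 \<longrightarrow> snd r = []"
  shows "kq_mult k X Y p = X p * Y (ptgt k p, [])"
proof -
  have Yr: "\<And>a b. Y (a,b) \<noteq> 0 \<Longrightarrow> b = []" using assms by auto
  have sub: "{(q, r). X q \<noteq> 0 \<and> Y r \<noteq> 0 \<and> ptgt k q = fst r \<and> p = cat q r} \<subseteq> {(p, (ptgt k p, []))}"
  proof
    fix x assume "x \<in> {(q, r). X q \<noteq> 0 \<and> Y r \<noteq> 0 \<and> ptgt k q = fst r \<and> p = cat q r}"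
    then obtain a b c d where x: "x = ((a,b),(c,d))" and h: "X (a, b) \<noteq> 0" "Y (c, d) \<noteq> 0" "ptgt k (a, b) = c" "p = cat (a, b) (c, d)"
      by auto
    from h(2) have "d = []" by (rule Yr)
    with h x show "x \<in> {(p, (ptgt k p, []))}" by (auto simp: cat_def)
  qed
  have "kq_mult k X Y p = (\<Sum>(q, r)\<in>{(p, (ptgt k p, []))}. X q * Y r)"
    unfolding kq_mult_alt by (rule sum.mono_neutral_left) (use sub in \<open>auto simp: cat_def\<close>)
  thus ?thesis by simp
qed

lemma kq_mult_left_diag:
  assumes "\<forall>q. X q \<noteq> 0 \<longrightarrow> snd q = []"
  shows "kq_mult k X Y p = X (fst p, []) * Y p"
proof -
  have Xr: "\<And>a b. X (a,b) \<noteq> 0 \<Longrightarrow> b = []" using assms by auto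
  have sub: "{(q, r). X q \<noteq> 0 \<and> Y r \<noteq> 0 \<and> ptgt k q = fst r \<and> p = cat q r} \<subseteq> {((fst p, []), p)}"
  proof
    fix x assume "x \<in> {(q, r). X q \<noteq> 0 \<and> Y r \<noteq> 0 \<and> ptgt k q = fst r \<and> p = cat q r}"
    then obtain a b c d where x: "x = ((a,b),(c,d))" and h: "X (a, b) \<noteq> 0" "Y (c, d) \<noteq> 0" "ptgt k (a, b) = c" "p = cat (a, b) (c, d)"
      by auto
    from h(1) have "b = []" by (rule Xr)
    with h x show "x \<in> {((fst p, []), p)}" by (auto simp: cat_def ptgt_def)
  qed
  have "kq_mult k X Y p = (\<Sum>(q, r)\<in>{((fst p, []), p)}. X q * Y r)"
    unfolding kq_mult_alt by (rule sum.mono_neutral_left) (use sub in \<open>auto simp: cat_def ptgt_def\<close>)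
  thus ?thesis by simp
qed


lemma is_path_cat:
  assumes q: "is_path k q" and r: "is_path k r" and c: "ptgt k q = fst r"
  shows "is_path k (cat q r)"
proof -
  obtain a L1 where qq: "q = (a, L1)" by (cases q)
  obtain b L2 where rr: "r = (b, L2)" by (cases r)
  have a: "a \<le> k" "set L1 \<subseteq> {..k}" "L1 \<noteq> [] \<Longrightarrow> hd L1 = a"
    "\<And>i. Suc i < length L1 \<Longrightarrow> cyc_tgt k (L1 ! i) = L1 ! Suc i"
    using q qq by (auto simp: is_path_def)
  have b: "b \<le> k" "set L2 \<subseteq> {..k}" "L2 \<noteq> [] \<Longrightarrow> hd L2 = b"
    "\<And>i. Suc i < length L2 \<Longrightarrow> cyc_tgt k (L2 ! i) = L2 ! Suc i"
    using r rr by (auto simp: is_path_def)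
  have cc: "(if L1 = [] then a else cyc_tgt k (last L1)) = b" using c by (simp add: qq rr ptgt_def split: if_splits)
  have hd: "L1 @ L2 \<noteq> [] \<Longrightarrow> hd (L1 @ L2) = a"
    using a(3) b(3) cc by (cases "L1 = []") auto
  have cons: "cyc_tgt k ((L1 @ L2) ! i) = (L1 @ L2) ! Suc i" if i: "Suc i < length (L1 @ L2)" for i
  proof -
    consider "Suc i < length L1" | "i = length L1 - 1" "L1 \<noteq> []" | "length L1 \<le> i" by (cases "L1 = []") (auto, linarith)
    thus ?thesis
    proof cases
      case 1 thus ?thesis using a(4)[of i] by (simp add: nth_append)
    next
      case 2
      hence "L2 \<noteq> []" using i by auto
      hence "L2 ! 0 = b" using b(3) by (simp add: hd_conv_nth)
      moreover have "L1 ! i = last L1" using 2 by (simp add: last_conv_nth)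
      ultimately show ?thesis using 2 cc by (simp add: nth_append)
    next
      case 3
      hence "Suc (i - length L1) < length L2" using i by auto
      from b(4)[OF this] 3 show ?thesis by (simp add: nth_append Suc_diff_le)
    qed
  qed
  show ?thesis using a b hd cons qq rr by (simp add: is_path_def cat_def)
qed

lemma kq_mult_supp_sub:
  "{p. kq_mult k X Y p \<noteq> 0} \<subseteq> (\<lambda>(q, r). cat q r) ` ({p. X p \<noteq> 0} \<times> {p. Y p \<noteq> 0})"
  by (auto dest!: kq_mult_nz)

lemma kq_mult_closed: "X \<in> kq_carrier k \<Longrightarrow> Y \<in> kq_carrier k \<Longrightarrow> kq_mult k X Y \<in> kq_carrier k"
  unfolding kq_carrier_def
proof (safe)
  assume "finite {p. X p \<noteq> 0}" "finite {p. Y p \<noteq> 0}"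
  thus "finite {p. kq_mult k X Y p \<noteq> 0}"
    by (rule finite_subset[OF kq_mult_supp_sub finite_imageI[OF finite_cartesian_product]])
next
  fix p assume "\<forall>p. X p \<noteq> 0 \<longrightarrow> is_path k p" "\<forall>p. Y p \<noteq> 0 \<longrightarrow> is_path k p" "kq_mult k X Y p \<noteq> 0"
  thus "is_path k p" by (auto dest!: kq_mult_nz intro: is_path_cat)
qed

lemma kq_add_closed: "X \<in> kq_carrier k \<Longrightarrow> Y \<in> kq_carrier k \<Longrightarrow> kq_add X Y \<in> kq_carrier k"
  unfolding kq_carrier_def kq_add_def
proof (safe)
  assume "finite {p. X p \<noteq> 0}" "finite {p. Y p \<noteq> 0}"
  moreover have "{p. X p + Y p \<noteq> 0} \<subseteq> {p. X p \<noteq> 0} \<union> {p. Y p \<noteq> 0}" by auto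
  ultimately show "finite {p. X p + Y p \<noteq> 0}" by (meson finite_UnI finite_subset)
next
  fix p assume "\<forall>p. X p \<noteq> 0 \<longrightarrow> is_path k p" "\<forall>p. Y p \<noteq> 0 \<longrightarrow> is_path k p" "X p + Y p \<noteq> 0"
  thus "is_path k p" by (metis add.right_neutral add_0)
qed

lemma kq_neg_closed: "X \<in> kq_carrier k \<Longrightarrow> (\<lambda>p. - X p) \<in> kq_carrier k"
  unfolding kq_carrier_def by auto

lemma kq_zero_closed[simp]: "(\<lambda>_. 0) \<in> kq_carrier k"
  unfolding kq_carrier_def by auto

lemma is_path_triv: "v \<le> k \<Longrightarrow> is_path k (v, [])"
  by (simp add: is_path_def)

lemma kq_e0_closed[simp]: "kq_e0 \<in> kq_carrier k"
  unfolding kq_carrier_def kq_e0_def by (auto simp: is_path_def)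

lemma kq_one_closed[simp]: "kq_one k \<in> kq_carrier k"
proof -
  have "{p. kq_one k p \<noteq> (0::'a)} \<subseteq> (\<lambda>v. (v, [])) ` {..k}"
    by (auto simp: kq_one_def image_iff intro!: exI[of _ "fst _"])
  hence "finite {p. kq_one k p \<noteq> (0::'a)}" by (rule finite_subset) auto
  thus ?thesis unfolding kq_carrier_def by (auto simp: kq_one_def is_path_def split: if_splits)
qed

definition cyc_list :: "nat \<Rightarrow> nat list" where "cyc_list k = [0..<Suc k]"

lemma is_path_cyc: "is_path k (0, cyc_list k)"
  by (auto simp del: upt_Suc simp: is_path_def cyc_list_def cyc_tgt_def hd_upt)

lemma kq_cycle_closed[simp]: "kq_cycle k \<in> kq_carrier k"
  unfolding kq_carrier_def kq_cycle_def using is_path_cyc[of k] by (auto simp: cyc_list_def)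

lemma ptgt_cyc: "ptgt k (0, cyc_list k) = 0"
  by (simp add: ptgt_def cyc_list_def cyc_tgt_def)

lemma is_path_ptgt: "is_path k p \<Longrightarrow> ptgt k p \<le> k"
  by (auto simp: is_path_def ptgt_def cyc_tgt_def)


lemma supp_kq_add_sub: "{p. kq_add X Y p \<noteq> 0} \<subseteq> {p. X p \<noteq> 0} \<union> {p. Y p \<noteq> 0}"
  by (auto simp: kq_add_def)

lemma kq_mult_add_left:
  assumes "X \<in> kq_carrier k" "Y \<in> kq_carrier k" "Z \<in> kq_carrier k"
  shows "kq_mult k (kq_add X Y) Z = kq_add (kq_mult k X Z) (kq_mult k Y Z)"
proof (rule ext)
  fix p
  let ?A = "{p. X p \<noteq> 0} \<union> {p. Y p \<noteq> 0}" and ?B = "{p. Z p \<noteq> 0}"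
  have f: "finite ?A" "finite ?B" using assms kq_carrierD by auto
  show "kq_mult k (kq_add X Y) Z p = kq_add (kq_mult k X Z) (kq_mult k Y Z) p"
    unfolding kq_add_def
    apply (subst (1 2 3) kq_mult_sup[OF f])
    using supp_kq_add_sub[of X Y] apply (auto simp: kq_add_def)[4]
    apply (simp add: sum.distrib[symmetric] distrib_right)
    apply (intro sum.cong refl)
    by (auto simp: algebra_simps)
qed

lemma kq_mult_add_right:
  assumes "X \<in> kq_carrier k" "Y \<in> kq_carrier k" "Z \<in> kq_carrier k"
  shows "kq_mult k Z (kq_add X Y) = kq_add (kq_mult k Z X) (kq_mult k Z Y)"
proof (rule ext)
  fix p
  let ?A = "{p. X p \<noteq> 0} \<union> {p. Y p \<noteq> 0}" and ?B = "{p. Z p \<noteq> 0}"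
  have f: "finite ?A" "finite ?B" using assms kq_carrierD by auto
  show "kq_mult k Z (kq_add X Y) p = kq_add (kq_mult k Z X) (kq_mult k Z Y) p"
    unfolding kq_add_def
    apply (subst (1 2 3) kq_mult_sup[OF f(2) f(1)])
    using supp_kq_add_sub[of X Y] apply (auto simp: kq_add_def)[4]
    apply (simp add: sum.distrib[symmetric] distrib_left)
    apply (intro sum.cong refl)
    by (auto simp: algebra_simps)
qed

lemma ptgt_cat: "ptgt k x = fst y \<Longrightarrow> ptgt k (cat x y) = ptgt k y"
  by (auto simp: ptgt_def cat_def)

lemma cat_assoc: "cat (cat x y) z = cat x (cat y z)" and fst_cat: "fst (cat x y) = fst x"
  by (auto simp: cat_def)

lemma kq_mult_assoc:
  assumes X: "X \<in> kq_carrier k" and Y: "Y \<in> kq_carrier k" and Z: "Z \<in> kq_carrier k"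
  shows "kq_mult k (kq_mult k X Y) Z = kq_mult k X (kq_mult k Y Z)"
proof (rule ext)
  fix p
  define A where "A = {p. X p \<noteq> 0}"
  define B where "B = {p. Y p \<noteq> 0}"
  define C where "C = {p. Z p \<noteq> 0}"
  define AB where "AB = (\<lambda>(q, r). cat q r) ` (A \<times> B)"
  define BC where "BC = (\<lambda>(q, r). cat q r) ` (B \<times> C)"
  have fA: "finite A" "finite B" "finite C" using assms kq_carrierD A_def B_def C_def by auto
  hence fAB: "finite AB" "finite BC" by (auto simp: AB_def BC_def)
  have sAB: "{p. kq_mult k X Y p \<noteq> 0} \<subseteq> AB" "{p. kq_mult k Y Z p \<noteq> 0} \<subseteq> BC"
    using kq_mult_supp_sub AB_def A_def B_def BC_def C_def by blast+
  have XY: "kq_mult k X Y u = (\<Sum>x\<in>A. \<Sum>y\<in>B. if ptgt k x = fst y \<and> u = cat x y then X x * Y y else 0)" for u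
    by (rule kq_mult_sup) (use fA in \<open>auto simp: A_def B_def\<close>)
  have YZ: "kq_mult k Y Z v = (\<Sum>y\<in>B. \<Sum>z\<in>C. if ptgt k y = fst z \<and> v = cat y z then Y y * Z z else 0)" for v
    by (rule kq_mult_sup) (use fA in \<open>auto simp: C_def B_def\<close>)
  define H where "H x y z = (if ptgt k x = fst y \<and> ptgt k y = fst z \<and> p = cat x (cat y z) then X x * Y y * Z z else 0)" for x y z
  have "kq_mult k (kq_mult k X Y) Z p = (\<Sum>u\<in>AB. \<Sum>z\<in>C. if ptgt k u = fst z \<and> p = cat u z then kq_mult k X Y u * Z z else 0)"
    by (rule kq_mult_sup) (use fAB fA sAB in \<open>auto simp: C_def\<close>)
  also have "\<dots> = (\<Sum>u\<in>AB. \<Sum>z\<in>C. \<Sum>x\<in>A. \<Sum>y\<in>B. if cat x y = u then (if ptgt k x = fst y \<and> ptgt k u = fst z \<and> p = cat u z then X x * Y y * Z z else 0) else 0)"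
    unfolding XY by (intro sum.cong refl) (auto simp: sum_distrib_right intro!: sum.cong sum.neutral)
  also have "\<dots> = (\<Sum>z\<in>C. \<Sum>u\<in>AB. \<Sum>x\<in>A. \<Sum>y\<in>B. if cat x y = u then (if ptgt k x = fst y \<and> ptgt k u = fst z \<and> p = cat u z then X x * Y y * Z z else 0) else 0)"
    by (rule sum.swap)
  also have "\<dots> = (\<Sum>z\<in>C. \<Sum>x\<in>A. \<Sum>u\<in>AB. \<Sum>y\<in>B. if cat x y = u then (if ptgt k x = fst y \<and> ptgt k u = fst z \<and> p = cat u z then X x * Y y * Z z else 0) else 0)"
    by (rule sum.cong[OF refl], rule sum.swap)
  also have "\<dots> = (\<Sum>z\<in>C. \<Sum>x\<in>A. \<Sum>y\<in>B. \<Sum>u\<in>AB. if cat x y = u then (if ptgt k x = fst y \<and> ptgt k u = fst z \<and> p = cat u z then X x * Y y * Z z else 0) else 0)"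
    by (rule sum.cong[OF refl], rule sum.cong[OF refl], rule sum.swap)
  also have "\<dots> = (\<Sum>z\<in>C. \<Sum>x\<in>A. \<Sum>y\<in>B. H x y z)"
  proof (intro sum.cong refl)
    fix z x y assume "z \<in> C" "x \<in> A" "y \<in> B"
    hence "cat x y \<in> AB" by (auto simp: AB_def)
    thus "(\<Sum>u\<in>AB. if cat x y = u then (if ptgt k x = fst y \<and> ptgt k u = fst z \<and> p = cat u z then X x * Y y * Z z else 0) else 0) = H x y z"
      using fAB by (simp add: sum.delta H_def ptgt_cat cat_assoc) (auto simp: ptgt_cat)
  qed
  also have "\<dots> = (\<Sum>x\<in>A. \<Sum>y\<in>B. \<Sum>z\<in>C. H x y z)"
    by (subst sum.swap) (rule sum.cong[OF refl], rule sum.swap)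
  finally have L: "kq_mult k (kq_mult k X Y) Z p = (\<Sum>x\<in>A. \<Sum>y\<in>B. \<Sum>z\<in>C. H x y z)" .
  have "kq_mult k X (kq_mult k Y Z) p = (\<Sum>x\<in>A. \<Sum>v\<in>BC. if ptgt k x = fst v \<and> p = cat x v then X x * kq_mult k Y Z v else 0)"
    by (rule kq_mult_sup) (use fAB fA sAB in \<open>auto simp: A_def\<close>)
  also have "\<dots> = (\<Sum>x\<in>A. \<Sum>v\<in>BC. \<Sum>y\<in>B. \<Sum>z\<in>C. if cat y z = v then (if ptgt k y = fst z \<and> ptgt k x = fst v \<and> p = cat x v then X x * (Y y * Z z) else 0) else 0)"
    unfolding YZ by (intro sum.cong refl) (auto simp: sum_distrib_left intro!: sum.cong sum.neutral)
  also have "\<dots> = (\<Sum>x\<in>A. \<Sum>y\<in>B. \<Sum>v\<in>BC. \<Sum>z\<in>C. if cat y z = v then (if ptgt k y = fst z \<and> ptgt k x = fst v \<and> p = cat x v then X x * (Y y * Z z) else 0) else 0)"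
    by (rule sum.cong[OF refl], rule sum.swap)
  also have "\<dots> = (\<Sum>x\<in>A. \<Sum>y\<in>B. \<Sum>z\<in>C. \<Sum>v\<in>BC. if cat y z = v then (if ptgt k y = fst z \<and> ptgt k x = fst v \<and> p = cat x v then X x * (Y y * Z z) else 0) else 0)"
    by (rule sum.cong[OF refl], rule sum.cong[OF refl], rule sum.swap)
  also have "\<dots> = (\<Sum>x\<in>A. \<Sum>y\<in>B. \<Sum>z\<in>C. H x y z)"
  proof (intro sum.cong refl)
    fix z x y assume "z \<in> C" "x \<in> A" "y \<in> B"
    hence "cat y z \<in> BC" by (auto simp: BC_def)
    thus "(\<Sum>v\<in>BC. if cat y z = v then (if ptgt k y = fst z \<and> ptgt k x = fst v \<and> p = cat x v then X x * (Y y * Z z) else 0) else 0) = H x y z"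
      using fAB by (simp add: sum.delta H_def fst_cat mult.assoc)
  qed
  finally show "kq_mult k (kq_mult k X Y) Z p = kq_mult k X (kq_mult k Y Z) p" using L by simp
qed


lemma kq_mult_one_right: "X \<in> kq_carrier k \<Longrightarrow> kq_mult k X (kq_one k) = X"
  by (rule ext, subst kq_mult_right_diag) (auto simp: kq_one_def kq_carrier_def dest: is_path_ptgt)

lemma kq_mult_one_left: "X \<in> kq_carrier k \<Longrightarrow> kq_mult k (kq_one k) X = X"
  by (rule ext, subst kq_mult_left_diag) (auto simp: kq_one_def, metis kq_carrierD(2) is_path_def prod.sel(1))

lemma kq_mult_neg_right: "kq_mult k X (\<lambda>p. - Y p) = (\<lambda>p. - kq_mult k X Y p)"
  by (rule ext) (simp add: kq_mult_def split_def sum_negf)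

lemma kq_mult_neg_left: "kq_mult k (\<lambda>p. - X p) Y = (\<lambda>p. - kq_mult k X Y p)"
  by (rule ext) (simp add: kq_mult_def split_def sum_negf)

lemma kq_e0_triv: "\<forall>q. kq_e0 q \<noteq> 0 \<longrightarrow> snd q = []"
  by (simp add: kq_e0_def)

lemma kq_mult_e0_left: "kq_mult k kq_e0 Y p = (if fst p = 0 then Y p else 0)"
  by (subst kq_mult_left_diag[OF kq_e0_triv]) (simp add: kq_e0_def)

lemma kq_mult_e0_right: "kq_mult k X kq_e0 p = (if ptgt k p = 0 then X p else 0)"
  by (subst kq_mult_right_diag[OF kq_e0_triv]) (simp add: kq_e0_def)

lemma kq_cycle_alt: "kq_cycle k = (\<lambda>p. if p = (0, cyc_list k) then 1 else 0)"
  by (simp add: kq_cycle_def cyc_list_def)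

lemma e0_cycle: "kq_mult k kq_e0 (kq_cycle k) = kq_cycle k"
  by (rule ext) (simp add: kq_mult_e0_left kq_cycle_alt)

lemma cycle_e0: "kq_mult k (kq_cycle k) kq_e0 = kq_cycle k"
  by (rule ext) (simp add: kq_mult_e0_right kq_cycle_alt ptgt_cyc)

lemma e0_e0: "kq_mult k kq_e0 kq_e0 = (kq_e0 :: path \<Rightarrow> 'a::field)"
  by (rule ext) (subst kq_mult_e0_left, simp add: kq_e0_def)

lemma cycle_mult_at:
  "kq_mult k (kq_cycle k) Y (0, cyc_list k @ L) = Y (0, L)"
proof -
  have sub: "{(q, r). kq_cycle k q \<noteq> 0 \<and> Y r \<noteq> 0 \<and> ptgt k q = fst r \<and> (0, cyc_list k @ L) = cat q r}
     \<subseteq> {((0, cyc_list k), (0, L))}"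
    by (auto simp: kq_cycle_alt cat_def ptgt_cyc split: if_splits)
  have "kq_mult k (kq_cycle k) Y (0, cyc_list k @ L) = (\<Sum>(q, r)\<in>{((0, cyc_list k), (0, L))}. kq_cycle k q * Y r)"
    unfolding kq_mult_alt by (rule sum.mono_neutral_left) (use sub in \<open>auto simp: cat_def ptgt_cyc kq_cycle_alt\<close>)
  thus ?thesis by (simp add: kq_cycle_alt)
qed

lemma mult_cycle_nz:
  assumes "kq_mult k X (kq_cycle k) p \<noteq> 0"
  shows "\<exists>q. X q \<noteq> 0 \<and> p = cat q (0, cyc_list k) \<and> ptgt k q = 0"
  using kq_mult_nz[OF assms] unfolding kq_cycle_alt by (fastforce split: if_splits)

lemma ptgt_cat_cyc: "ptgt k (cat q (0, cyc_list k)) = 0"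
  by (simp add: ptgt_def cat_def cyc_list_def cyc_tgt_def)

lemma length_cyc_list[simp]: "length (cyc_list k) = Suc k"
  by (simp add: cyc_list_def)


lemma KQ_simps[simp]: "carrier (KQ k) = kq_carrier k" "monoid.mult (KQ k) = kq_mult k"
  "one (KQ k) = kq_one k" "zero (KQ k) = (\<lambda>_. 0)" "add (KQ k) = kq_add"
  by (simp_all add: KQ_def)

lemma Fmod_simps[simp]: "mcarrier (Fmod k) = F_carrier k"
  "madd (Fmod k) x y = (\<lambda>\<xi> n p. x \<xi> n p + y \<xi> n p)"
  "mzero (Fmod k) = (\<lambda>_ _ _. 0)"
  "msmul (Fmod k) x r = (\<lambda>\<xi> n. kq_mult k (x \<xi> n) r)"
  by (simp_all add: Fmod_def kq_add_def)

lemma F_carrierD: assumes "x \<in> F_carrier k"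
  shows "finite {(\<xi>, n). x \<xi> n \<noteq> (\<lambda>_. 0)}" "x \<xi> n \<in> kq_carrier k"
    "\<not> is_lim \<xi> \<Longrightarrow> n \<noteq> 0 \<Longrightarrow> x \<xi> n = (\<lambda>_. 0)"
  using assms unfolding F_carrier_def by auto

lemma F_add_closed:
  assumes "x \<in> F_carrier k" "y \<in> F_carrier k"
  shows "(\<lambda>\<xi> n p. x \<xi> n p + y \<xi> n p) \<in> F_carrier k"
proof -
  have "{(\<xi>, n). (\<lambda>p. x \<xi> n p + y \<xi> n p) \<noteq> (\<lambda>_. 0)} \<subseteq> {(\<xi>, n). x \<xi> n \<noteq> (\<lambda>_. 0)} \<union> {(\<xi>, n). y \<xi> n \<noteq> (\<lambda>_. 0)}"
    by auto
  hence "finite {(\<xi>, n). (\<lambda>p. x \<xi> n p + y \<xi> n p) \<noteq> (\<lambda>_. 0)}"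
    using F_carrierD(1)[OF assms(1)] F_carrierD(1)[OF assms(2)] by (meson finite_UnI finite_subset)
  moreover have "(\<lambda>p. x \<xi> n p + y \<xi> n p) \<in> kq_carrier k" for \<xi> n
    using kq_add_closed[OF F_carrierD(2)[OF assms(1)] F_carrierD(2)[OF assms(2)]] by (simp add: kq_add_def)
  ultimately show ?thesis using assms unfolding F_carrier_def by auto
qed

lemma F_smul_closed:
  assumes "x \<in> F_carrier k" "r \<in> kq_carrier k"
  shows "(\<lambda>\<xi> n. kq_mult k (x \<xi> n) r) \<in> F_carrier k"
proof -
  have "{(\<xi>, n). kq_mult k (x \<xi> n) r \<noteq> (\<lambda>_. 0)} \<subseteq> {(\<xi>, n). x \<xi> n \<noteq> (\<lambda>_. 0)}"
    by auto
  hence "finite {(\<xi>, n). kq_mult k (x \<xi> n) r \<noteq> (\<lambda>_. 0)}"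
    using F_carrierD(1)[OF assms(1)] by (meson finite_subset)
  moreover have "kq_mult k (x \<xi> n) r \<in> kq_carrier k" for \<xi> n
    using kq_mult_closed[OF F_carrierD(2)[OF assms(1)] assms(2)] .
  ultimately show ?thesis using assms unfolding F_carrier_def by auto
qed

lemma F_zero_closed[simp]: "(\<lambda>_ _ _. 0) \<in> F_carrier k"
  unfolding F_carrier_def by auto

lemma F_neg_closed: "x \<in> F_carrier k \<Longrightarrow> Fneg x \<in> F_carrier k"
  unfolding F_carrier_def Fneg_def kq_carrier_def by (auto simp: fun_eq_iff)

lemma F_is_submodule: "is_submodule (KQ k) (Fmod k) (F_carrier k)"
  unfolding is_submodule_def using F_add_closed F_smul_closed by auto

lemma gen_sub_least: "is_submodule R M N \<Longrightarrow> S \<subseteq> N \<Longrightarrow> gen_submodule R M S \<subseteq> N"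
  unfolding gen_submodule_def by auto

lemma gen_sub_incl: "S \<subseteq> gen_submodule R M S"
  unfolding gen_submodule_def by auto

lemma gen_sub_is_sub:
  assumes "is_submodule R M N0" "S \<subseteq> N0"
  shows "is_submodule R M (gen_submodule R M S)"
  unfolding is_submodule_def
proof (intro conjI ballI)
  show "gen_submodule R M S \<subseteq> mcarrier M"
    using gen_sub_least[OF assms] assms(1) unfolding is_submodule_def by auto
qed (auto simp: gen_submodule_def is_submodule_def)

definition negone :: "nat \<Rightarrow> path \<Rightarrow> 'k::field" where "negone k = (\<lambda>p. - kq_one k p)"

lemma negone_closed[simp]: "negone k \<in> kq_carrier k"
  unfolding negone_def by (rule kq_neg_closed) simp

lemma mult_negone: "X \<in> kq_carrier k \<Longrightarrow> kq_mult k X (negone k) = (\<lambda>p. - X p)"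
  unfolding negone_def kq_mult_neg_right by (simp add: kq_mult_one_right)

lemma F_smul_negone: "x \<in> F_carrier k \<Longrightarrow> msmul (Fmod k) x (negone k) = Fneg x"
  by (auto simp: Fneg_def mult_negone F_carrierD)

locale fsub =
  fixes k :: nat and I :: "('w::wellorder, 'k::field) Fel set"
  assumes sub: "is_submodule (KQ k) (Fmod k) I"
begin

lemma I_F: "I \<subseteq> F_carrier k" using sub unfolding is_submodule_def by auto
lemma I_zero: "(\<lambda>_ _ _. 0) \<in> I" using sub unfolding is_submodule_def by auto
lemma I_add: "x \<in> I \<Longrightarrow> y \<in> I \<Longrightarrow> (\<lambda>\<xi> n p. x \<xi> n p + y \<xi> n p) \<in> I"
  using sub unfolding is_submodule_def by auto
lemma I_smul: "x \<in> I \<Longrightarrow> r \<in> kq_carrier k \<Longrightarrow> (\<lambda>\<xi> n. kq_mult k (x \<xi> n) r) \<in> I"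
  using sub unfolding is_submodule_def by auto
lemma I_neg: "x \<in> I \<Longrightarrow> Fneg x \<in> I"
  using I_smul[of x "negone k"] F_smul_negone[of x k] I_F by auto

abbreviation cs where "cs \<equiv> coset (Fmod k) I"

lemma cs_def': "cs x = {(\<lambda>\<xi> n p. x \<xi> n p + i \<xi> n p) | i. i \<in> I}"
  by (simp add: coset_def)

lemma cs_self: "x \<in> cs x"
  unfolding cs_def' using I_zero by force

lemma cs_add_I: assumes "i \<in> I" shows "cs (\<lambda>\<xi> n p. x \<xi> n p + i \<xi> n p) = cs x"
proof -
  have "cs (\<lambda>\<xi> n p. x \<xi> n p + i \<xi> n p) \<subseteq> cs x" if "i \<in> I" for x i
  proof
    fix z assume "z \<in> cs (\<lambda>\<xi> n p. x \<xi> n p + i \<xi> n p)"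
    then obtain j where "j \<in> I" "z = (\<lambda>\<xi> n p. x \<xi> n p + i \<xi> n p + j \<xi> n p)" unfolding cs_def' by auto
    thus "z \<in> cs x" unfolding cs_def' using I_add[OF \<open>i \<in> I\<close> \<open>j \<in> I\<close>]
      by (auto simp: add.assoc intro!: exI[of _ "\<lambda>\<xi> n p. i \<xi> n p + j \<xi> n p"])
  qed
  moreover have "cs x \<subseteq> cs (\<lambda>\<xi> n p. x \<xi> n p + i \<xi> n p)"
  proof
    fix z assume "z \<in> cs x"
    then obtain j where "j \<in> I" "z = (\<lambda>\<xi> n p. x \<xi> n p + j \<xi> n p)" unfolding cs_def' by auto
    thus "z \<in> cs (\<lambda>\<xi> n p. x \<xi> n p + i \<xi> n p)" unfolding cs_def' using I_add[OF I_neg[OF assms] \<open>j \<in> I\<close>]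
      by (auto simp: Fneg_def intro!: exI[of _ "\<lambda>\<xi> n p. - i \<xi> n p + j \<xi> n p"])
  qed
  ultimately show ?thesis using assms by blast
qed

lemma cs_mem: "z \<in> cs x \<Longrightarrow> \<exists>i\<in>I. z = (\<lambda>\<xi> n p. x \<xi> n p + i \<xi> n p)"
  unfolding cs_def' by auto

lemma cs_eq_mem: "z \<in> cs x \<Longrightarrow> cs z = cs x"
  using cs_mem cs_add_I by blast

lemma cs_eqD: "cs x = cs y \<Longrightarrow> \<exists>i\<in>I. y = (\<lambda>\<xi> n p. x \<xi> n p + i \<xi> n p)"
  using cs_self[of y] cs_mem by auto

lemma cs_I: "i \<in> I \<Longrightarrow> cs i = cs (\<lambda>_ _ _. 0)"
  using cs_add_I[of i "\<lambda>_ _ _. 0"] by simp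

abbreviation Q where "Q \<equiv> quot_mod (Fmod k) I"

lemma some_cs: "(SOME a. a \<in> cs x) \<in> cs x"
  by (metis cs_self someI)

lemma Q_add: assumes "x \<in> F_carrier k" "y \<in> F_carrier k"
  shows "madd Q (cs x) (cs y) = cs (\<lambda>\<xi> n p. x \<xi> n p + y \<xi> n p)"
proof -
  obtain i where i: "i \<in> I" "(SOME a. a \<in> cs x) = (\<lambda>\<xi> n p. x \<xi> n p + i \<xi> n p)" using cs_mem[OF some_cs] by blast
  obtain j where j: "j \<in> I" "(SOME a. a \<in> cs y) = (\<lambda>\<xi> n p. y \<xi> n p + j \<xi> n p)" using cs_mem[OF some_cs] by blast
  have "madd Q (cs x) (cs y) = cs (\<lambda>\<xi> n p. (x \<xi> n p + y \<xi> n p) + (i \<xi> n p + j \<xi> n p))"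
    unfolding quot_mod_def using i j by (simp add: algebra_simps)
  also have "\<dots> = cs (\<lambda>\<xi> n p. x \<xi> n p + y \<xi> n p)"
    using cs_add_I[OF I_add[OF i(1) j(1)], of "\<lambda>\<xi> n p. x \<xi> n p + y \<xi> n p"] by simp
  finally show ?thesis .
qed

lemma Q_smul: assumes "x \<in> F_carrier k" "r \<in> kq_carrier k"
  shows "msmul Q (cs x) r = cs (\<lambda>\<xi> n. kq_mult k (x \<xi> n) r)"
proof -
  obtain i where i: "i \<in> I" "(SOME a. a \<in> cs x) = (\<lambda>\<xi> n p. x \<xi> n p + i \<xi> n p)" using cs_mem[OF some_cs] by blast
  have iF: "i \<in> F_carrier k" using i I_F by auto
  have "(\<lambda>\<xi> n. kq_mult k (\<lambda>p. x \<xi> n p + i \<xi> n p) r) = (\<lambda>\<xi> n p. kq_mult k (x \<xi> n) r p + kq_mult k (i \<xi> n) r p)"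
    using kq_mult_add_left[OF F_carrierD(2)[OF assms(1)] F_carrierD(2)[OF iF] assms(2)]
    by (simp add: kq_add_def)
  hence "msmul Q (cs x) r = cs (\<lambda>\<xi> n p. kq_mult k (x \<xi> n) r p + kq_mult k (i \<xi> n) r p)"
    unfolding quot_mod_def using i by simp
  also have "\<dots> = cs (\<lambda>\<xi> n. kq_mult k (x \<xi> n) r)"
    using cs_add_I[OF I_smul[OF i(1) assms(2)], of "\<lambda>\<xi> n. kq_mult k (x \<xi> n) r"] by simp
  finally show ?thesis .
qed

lemma Q_zero: "mzero Q = cs (\<lambda>_ _ _. 0)"
  by (simp add: quot_mod_def)

lemma Q_carrier: "mcarrier Q = cs ` F_carrier k"
  by (simp add: quot_mod_def)

lemma Q_is_sub: "is_submodule (KQ k) Q (mcarrier Q)"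
  unfolding is_submodule_def Q_carrier
proof (intro conjI ballI)
  show "mzero Q \<in> cs ` F_carrier k" unfolding Q_zero by auto
next
  fix A B assume "A \<in> cs ` F_carrier k" "B \<in> cs ` F_carrier k"
  then obtain x y where "x \<in> F_carrier k" "y \<in> F_carrier k" "A = cs x" "B = cs y" by auto
  thus "madd Q A B \<in> cs ` F_carrier k" using Q_add imageI[OF F_add_closed] by simp
next
  fix A and r :: "path \<Rightarrow> 'k" assume "A \<in> cs ` F_carrier k" "r \<in> carrier (KQ k)"
  then obtain x where "x \<in> F_carrier k" "A = cs x" "r \<in> kq_carrier k" by auto
  thus "msmul Q A r \<in> cs ` F_carrier k" using Q_smul imageI[OF F_smul_closed] by simp
qed auto

end


definition F0 :: "nat \<Rightarrow> ('w::wellorder, 'k::field) Fel set" where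
  "F0 k = {x \<in> F_carrier k. \<forall>\<xi> n p. x \<xi> n p \<noteq> 0 \<longrightarrow> fst p = 0}"

lemma F0D: "x \<in> F0 k \<Longrightarrow> x \<xi> n p \<noteq> 0 \<Longrightarrow> fst p = 0"
  unfolding F0_def by blast

lemma F0_FD: "x \<in> F0 k \<Longrightarrow> x \<in> F_carrier k"
  unfolding F0_def by blast

lemma F0I: "x \<in> F_carrier k \<Longrightarrow> (\<And>\<xi> n p. x \<xi> n p \<noteq> 0 \<Longrightarrow> fst p = 0) \<Longrightarrow> x \<in> F0 k"
  unfolding F0_def by blast

definition fz :: "path set \<Rightarrow> (path \<Rightarrow> 'k::field) set" where
  "fz P = {c. \<forall>p. c p \<noteq> 0 \<longrightarrow> p \<in> P}"

lemma F0_is_submodule: "is_submodule (KQ k) (Fmod k) (F0 k :: ('w::wellorder,'k::field) Fel set)"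
  unfolding is_submodule_def
proof (intro conjI ballI)
  fix x y :: "('w,'k) Fel" assume x: "x \<in> F0 k" and y: "y \<in> F0 k"
  have "(\<lambda>\<xi> n p. x \<xi> n p + y \<xi> n p) \<in> F_carrier k" using x y F_add_closed by (auto simp: F0_def)
  moreover have "fst p = 0" if "x \<xi> n p + y \<xi> n p \<noteq> 0" for \<xi> n p
  proof -
    have "x \<xi> n p \<noteq> 0 \<or> y \<xi> n p \<noteq> 0" using that by auto
    thus ?thesis using F0D[OF x] F0D[OF y] by blast
  qed
  ultimately show "madd (Fmod k) x y \<in> F0 k" by (simp only: Fmod_simps) (rule F0I)
next
  fix x :: "('w,'k) Fel" and r :: "path \<Rightarrow> 'k" assume x: "x \<in> F0 k" and r: "r \<in> carrier (KQ k)"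
  have "(\<lambda>\<xi> n. kq_mult k (x \<xi> n) r) \<in> F_carrier k" using x r F_smul_closed by (auto simp: F0_def)
  moreover have "fst p = 0" if h: "kq_mult k (x \<xi> n) r p \<noteq> 0" for \<xi> n p
  proof -
    obtain q r' where "x \<xi> n q \<noteq> 0" "p = cat q r'" using kq_mult_nz[OF h] by blast
    thus ?thesis using F0D[OF x] by (auto simp: cat_def)
  qed
  ultimately show "msmul (Fmod k) x r \<in> F0 k" by (simp only: Fmod_simps) (rule F0I)
qed (auto simp: F0_def)

lemma F0_F: "F0 k \<subseteq> F_carrier k" by (auto simp: F0_def)

definition valid :: "'w::wellorder \<Rightarrow> nat \<Rightarrow> bool" where "valid \<xi> n \<longleftrightarrow> is_lim \<xi> \<or> n = 0"

lemma unitv_F: "c \<in> kq_carrier k \<Longrightarrow> valid \<xi> n \<Longrightarrow> unitv \<xi> n c \<in> F_carrier k"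
proof -
  assume c: "c \<in> kq_carrier k" and v: "valid \<xi> n"
  have "{(\<xi>', n'). unitv \<xi> n c \<xi>' n' \<noteq> (\<lambda>_. 0)} \<subseteq> {(\<xi>, n)}" by (auto simp: unitv_def)
  hence "finite {(\<xi>', n'). unitv \<xi> n c \<xi>' n' \<noteq> (\<lambda>_. 0)}" by (rule finite_subset) auto
  thus ?thesis using c v unfolding F_carrier_def valid_def by (auto simp: unitv_def)
qed

lemma unitv_F0: "c \<in> kq_carrier k \<Longrightarrow> valid \<xi> n \<Longrightarrow> c \<in> fz {p. fst p = 0} \<Longrightarrow> unitv \<xi> n c \<in> F0 k"
  by (rule F0I[OF unitv_F]) (auto simp: fz_def unitv_def split: if_splits)

lemma unitv_smul: "msmul (Fmod k) (unitv \<xi> n c) r = unitv \<xi> n (kq_mult k c r)"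
  by (auto simp: unitv_def fun_eq_iff)

lemma e0_fz: "kq_e0 \<in> fz {p. fst p = 0}"
  by (auto simp: fz_def kq_e0_def)

lemma e0_mult_fz: "c \<in> fz {p. fst p = 0} \<Longrightarrow> kq_mult k kq_e0 c = c"
  by (auto simp: fun_eq_iff kq_mult_e0_left fz_def)

lemma unitv_zero[simp]: "unitv \<xi> n (\<lambda>_. 0) = (\<lambda>_ _ _. 0)"
  by (auto simp: unitv_def fun_eq_iff)

lemma F0_induct:
  fixes x :: "('w::wellorder,'k::field) Fel"
  assumes "x \<in> F0 k"
    and z: "P (\<lambda>_ _ _. 0)"
    and step: "\<And>x \<xi> n c. x \<in> F0 k \<Longrightarrow> P x \<Longrightarrow> c \<in> kq_carrier k \<Longrightarrow> valid \<xi> n \<Longrightarrow> c \<in> fz {p. fst p = 0} \<Longrightarrow>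
      P (\<lambda>\<xi>' n' p. x \<xi>' n' p + unitv \<xi> n c \<xi>' n' p)"
  shows "P x"
proof -
  have "\<forall>x::('w,'k) Fel\<in>F0 k. {(\<xi>, n). x \<xi> n \<noteq> (\<lambda>_. 0)} \<subseteq> S \<longrightarrow> P x" if "finite S" for S
    using that
  proof (induction S rule: finite_induct)
    case empty
    { fix x :: "('w,'k) Fel" assume "x \<in> F0 k" "{(\<xi>, n). x \<xi> n \<noteq> (\<lambda>_. 0)} \<subseteq> {}"
      hence "x = (\<lambda>_ _ _. 0)" by (auto simp: fun_eq_iff)
      hence "P x" using z by simp }
    thus ?case by blast
  next
    case (insert s S)
    obtain \<xi> n where s: "s = (\<xi>, n)" by (cases s)
    show ?case
    proof (intro ballI impI)
      fix x :: "('w,'k) Fel" assume x: "x \<in> F0 k" and sx: "{(\<xi>, n). x \<xi> n \<noteq> (\<lambda>_. 0)} \<subseteq> insert s S"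
      define x' where "x' = (\<lambda>\<xi>' n'. if \<xi>' = \<xi> \<and> n' = n then (\<lambda>_. 0) else x \<xi>' n')"
      have xF: "x \<in> F_carrier k" using x F0_F by auto
      have "{(\<xi>', n'). x' \<xi>' n' \<noteq> (\<lambda>_. 0)} \<subseteq> {(\<xi>, n). x \<xi> n \<noteq> (\<lambda>_. 0)}" by (auto simp: x'_def)
      hence "finite {(\<xi>', n'). x' \<xi>' n' \<noteq> (\<lambda>_. 0)}" using F_carrierD(1)[OF xF] by (rule finite_subset)
      hence "x' \<in> F_carrier k" using F_carrierD(2,3)[OF xF] unfolding F_carrier_def x'_def by auto
      hence x'F0: "x' \<in> F0 k" by (rule F0I) (use F0D[OF x] in \<open>auto simp: x'_def split: if_splits\<close>)
      have "{(\<xi>', n'). x' \<xi>' n' \<noteq> (\<lambda>_. 0)} \<subseteq> S" using sx s by (auto simp: x'_def)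
      hence Px': "P x'" using insert.IH x'F0 by blast
      show "P x"
      proof (cases "x \<xi> n = (\<lambda>_. 0)")
        case True
        hence "x = x'" by (auto simp: x'_def fun_eq_iff)
        thus ?thesis using Px' by simp
      next
        case False
        hence v: "valid \<xi> n" using F_carrierD(3)[OF xF] unfolding valid_def by auto
        have c: "x \<xi> n \<in> kq_carrier k" using F_carrierD(2)[OF xF] .
        have cz: "x \<xi> n \<in> fz {p. fst p = 0}" using F0D[OF x] by (auto simp: fz_def)
        have "x = (\<lambda>\<xi>' n' p. x' \<xi>' n' p + unitv \<xi> n (x \<xi> n) \<xi>' n' p)"
          by (auto simp: x'_def unitv_def fun_eq_iff)
        thus ?thesis using step[OF x'F0 Px' c v cz] by simp
      qed
    qed
  qed
  moreover have "finite {(\<xi>, n). x \<xi> n \<noteq> (\<lambda>_. 0)}" using assms(1) F0_F F_carrierD(1) by blast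
  ultimately show ?thesis using assms(1) by blast
qed

lemma ladder_gen_eq:
  "ladder_gen k \<zeta> \<alpha> n = (\<lambda>\<xi> m p. unitv (\<zeta> \<alpha> n) 0 kq_e0 \<xi> m p + unitv \<alpha> n (\<lambda>p. - kq_e0 p) \<xi> m p
        + unitv \<alpha> (Suc n) (kq_cycle k) \<xi> m p)"
  by (auto simp: ladder_gen_def e_succ_def e_lim_def Fneg_def unitv_def fun_eq_iff e0_cycle)

lemma negate_fz: "c \<in> fz P \<Longrightarrow> (\<lambda>p. - c p) \<in> fz P" by (auto simp: fz_def)

lemma cycle_fz: "kq_cycle k \<in> fz {p. fst p = 0}" by (auto simp: fz_def kq_cycle_def)

lemma ladder_gen_F0: "is_lim \<alpha> \<Longrightarrow> ladder_gen k \<zeta> \<alpha> n \<in> F0 k"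
proof -
  assume a: "is_lim \<alpha>"
  let ?A = "unitv (\<zeta> \<alpha> n) 0 kq_e0 :: ('a, 'b) Fel" and ?B = "unitv \<alpha> n (\<lambda>p. - kq_e0 p) :: ('a, 'b) Fel"
    and ?C = "unitv \<alpha> (Suc n) (kq_cycle k) :: ('a, 'b) Fel"
  have A: "?A \<in> F0 k" by (rule unitv_F0) (auto simp: valid_def e0_fz)
  have B: "?B \<in> F0 k" by (rule unitv_F0) (auto simp: valid_def a intro: kq_neg_closed negate_fz e0_fz)
  have C: "?C \<in> F0 k" by (rule unitv_F0) (auto simp: valid_def a cycle_fz)
  have "madd (Fmod k) (madd (Fmod k) ?A ?B) ?C \<in> F0 k"
    using F0_is_submodule[of k] A B C unfolding is_submodule_def by blast
  thus ?thesis unfolding ladder_gen_eq by simp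
qed

locale mctx =
  fixes k :: nat and \<zeta> :: "'w::wellorder \<Rightarrow> nat \<Rightarrow> 'w" and I :: "('w, 'k::field) Fel set"
  assumes I_eq: "I = I_sub k \<zeta>"
begin

lemma G_F0: "is_lim \<alpha> \<Longrightarrow> G_sub k \<zeta> \<alpha> \<subseteq> (F0 k :: ('w, 'k) Fel set)"
  unfolding G_sub_def by (rule gen_sub_least[OF F0_is_submodule]) (auto intro: ladder_gen_F0)

lemma I_F0: "I \<subseteq> F0 k"
  unfolding I_eq I_sub_def by (rule gen_sub_least[OF F0_is_submodule]) (use G_F0 in blast)

lemma I_sub: "is_submodule (KQ k) (Fmod k) I"
  unfolding I_eq I_sub_def
  by (rule gen_sub_is_sub[OF F_is_submodule]) (use G_F0 F0_F in blast)

sublocale fsub k I by unfold_locales (rule I_sub)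

lemma ladder_gen_I: "is_lim \<alpha> \<Longrightarrow> ladder_gen k \<zeta> \<alpha> n \<in> I"
proof -
  assume a: "is_lim \<alpha>"
  have "ladder_gen k \<zeta> \<alpha> n \<in> G_sub k \<zeta> \<alpha>" unfolding G_sub_def by (rule subsetD[OF gen_sub_incl]) auto
  thus ?thesis unfolding I_eq I_sub_def using a by (intro subsetD[OF gen_sub_incl]) auto
qed

abbreviation M where "M \<equiv> M_omega1 k \<zeta> :: (('w, 'k) Fel set, path \<Rightarrow> 'k) rmod"

definition gens :: "('w, 'k) Fel set set" where
  "gens = {cs (e_succ \<gamma>) | \<gamma>. \<not> is_lim \<gamma>} \<union> {cs (e_lim \<alpha> n) | \<alpha> n. is_lim \<alpha>}"

lemma FI_Q: "FI_mod k \<zeta> = Q" by (simp add: FI_mod_def I_eq)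

lemma M_ops: "madd M = madd Q" "msmul M = msmul Q" "mzero M = mzero Q"
  by (simp_all add: M_omega1_def submod_def FI_Q)

lemma M_carrier: "mcarrier M = gen_submodule (KQ k) Q gens"
  unfolding M_omega1_def submod_def FI_mod_def I_eq[symmetric] gens_def by simp

lemma gen_valid: "valid \<xi> n \<Longrightarrow> cs (unitv \<xi> n kq_e0) \<in> gens"
  unfolding gens_def valid_def e_succ_def e_lim_def by auto

lemma gens_valid: "A \<in> gens \<Longrightarrow> \<exists>\<xi> n. valid \<xi> n \<and> A = cs (unitv \<xi> n kq_e0)"
  unfolding gens_def valid_def e_succ_def e_lim_def by auto

lemma gens_Q: "gens \<subseteq> mcarrier Q"
proof
  fix A assume "A \<in> gens"
  then obtain \<xi> n where "valid \<xi> n" "A = cs (unitv \<xi> n kq_e0)" using gens_valid by blast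
  thus "A \<in> mcarrier Q" unfolding Q_carrier using imageI[OF unitv_F[OF kq_e0_closed]] by blast
qed

lemma M_is_sub: "is_submodule (KQ k) Q (mcarrier M)"
  unfolding M_carrier by (rule gen_sub_is_sub[OF Q_is_sub gens_Q])

lemma M_zero: "mzero Q \<in> mcarrier M"
  using M_is_sub unfolding is_submodule_def by blast
lemma M_add: "A \<in> mcarrier M \<Longrightarrow> B \<in> mcarrier M \<Longrightarrow> madd Q A B \<in> mcarrier M"
  using M_is_sub unfolding is_submodule_def by blast
lemma M_smul: "A \<in> mcarrier M \<Longrightarrow> r \<in> kq_carrier k \<Longrightarrow> msmul Q A r \<in> mcarrier M"
  using M_is_sub unfolding is_submodule_def by simp

lemma cs_F0_sub: "is_submodule (KQ k) Q (cs ` F0 k)"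
  unfolding is_submodule_def
proof (intro conjI ballI)
  show "cs ` F0 k \<subseteq> mcarrier Q" unfolding Q_carrier using F0_F by auto
  show "mzero Q \<in> cs ` F0 k" unfolding Q_zero using F0_is_submodule[of k] unfolding is_submodule_def by auto
next
  fix A B assume "A \<in> cs ` F0 k" "B \<in> cs ` F0 k"
  then obtain x y where xy: "x \<in> F0 k" "y \<in> F0 k" "A = cs x" "B = cs y" by auto
  hence "madd (Fmod k) x y \<in> F0 k" using F0_is_submodule[of k] unfolding is_submodule_def by blast
  moreover have "madd Q A B = cs (madd (Fmod k) x y)" using Q_add[OF F0_FD[OF xy(1)] F0_FD[OF xy(2)]] xy by simp
  ultimately show "madd Q A B \<in> cs ` F0 k" by blast
next
  fix A and r :: "path \<Rightarrow> 'k" assume "A \<in> cs ` F0 k" "r \<in> carrier (KQ k)"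
  then obtain x where xy: "x \<in> F0 k" "A = cs x" "r \<in> kq_carrier k" by auto
  hence "msmul (Fmod k) x r \<in> F0 k" using F0_is_submodule[of k] unfolding is_submodule_def by auto
  moreover have "msmul Q A r = cs (msmul (Fmod k) x r)" using Q_smul[OF F0_FD[OF xy(1)] xy(3)] xy by simp
  ultimately show "msmul Q A r \<in> cs ` F0 k" by blast
qed

lemma M_carrier_eq: "mcarrier M = cs ` F0 k"
proof
  show "mcarrier M \<subseteq> cs ` F0 k" unfolding M_carrier
  proof (rule gen_sub_least[OF cs_F0_sub])
    show "gens \<subseteq> cs ` F0 k"
    proof
      fix A assume "A \<in> gens"
      then obtain \<xi> n where "valid \<xi> n" "A = cs (unitv \<xi> n kq_e0)" using gens_valid by blast
      thus "A \<in> cs ` F0 k" using imageI[OF unitv_F0[OF kq_e0_closed _ e0_fz]] by blast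
    qed
  qed
  show "cs ` F0 k \<subseteq> mcarrier M"
  proof
    fix A assume "A \<in> cs ` F0 k"
    then obtain x where x: "x \<in> F0 k" "A = cs x" by auto
    have "cs x \<in> mcarrier M"
    proof (rule F0_induct[OF x(1), where P="\<lambda>x. cs x \<in> mcarrier M"])
      show "cs (\<lambda>_ _ _. 0) \<in> mcarrier M" using M_zero unfolding Q_zero .
    next
      fix x :: "('w,'k) Fel" and \<xi> :: 'w and n and c :: "path \<Rightarrow> 'k" assume 2: "x \<in> F0 k" "cs x \<in> mcarrier M" "c \<in> kq_carrier k" "valid \<xi> n" "c \<in> fz {p. fst p = 0}"
      have uF: "unitv \<xi> n c \<in> F_carrier k" using unitv_F 2(3,4) by blast
      have "msmul Q (cs (unitv \<xi> n kq_e0)) c = cs (msmul (Fmod k) (unitv \<xi> n kq_e0) c)"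
        using Q_smul[OF unitv_F[OF kq_e0_closed 2(4)] 2(3)] by simp
      also have "\<dots> = cs (unitv \<xi> n c)" unfolding unitv_smul e0_mult_fz[OF 2(5)] ..
      finally have e1: "cs (unitv \<xi> n c) = msmul Q (cs (unitv \<xi> n kq_e0)) c" ..
      have "cs (unitv \<xi> n kq_e0) \<in> mcarrier M"
        unfolding M_carrier by (rule subsetD[OF gen_sub_incl gen_valid[OF 2(4)]])
      hence m1: "cs (unitv \<xi> n c) \<in> mcarrier M"
        unfolding e1 using 2(3) by (rule M_smul)
      have e2: "cs (\<lambda>\<xi>' n' p. x \<xi>' n' p + unitv \<xi> n c \<xi>' n' p) = madd Q (cs x) (cs (unitv \<xi> n c))"
        using Q_add[OF F0_FD[OF 2(1)] uF] by simp
      show "cs (\<lambda>\<xi>' n' p. x \<xi>' n' p + unitv \<xi> n c \<xi>' n' p) \<in> mcarrier M"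
        unfolding e2 using 2(2) m1 by (rule M_add)
    qed
    thus "A \<in> mcarrier M" using x by simp
  qed
qed

end


definition suppF :: "('w, 'k::field) Fel \<Rightarrow> ('w \<times> nat) set" where
  "suppF x = {(\<xi>, n). x \<xi> n \<noteq> (\<lambda>_. 0)}"

lemma suppF_fin: "x \<in> F_carrier k \<Longrightarrow> finite (suppF x)"
  unfolding suppF_def by (rule F_carrierD(1))

locale extctx = mctx k \<zeta> I for k \<zeta> and I :: "('w::wellorder, 'k::field) Fel set" +
  fixes E :: "('e, path \<Rightarrow> 'k) rmod" and i :: "(path \<Rightarrow> 'k) \<Rightarrow> 'e" and p :: "'e \<Rightarrow> ('w, 'k) Fel set"
  assumes E: "right_module (KQ k) E" and ihom: "rmod_hom (KQ k) (KQmod k) E i"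
    and phom: "rmod_hom (KQ k) E M p"
    and iinj: "inj_on i (kq_carrier k)" and psurj: "p ` mcarrier E = mcarrier M"
    and pker: "\<forall>x\<in>mcarrier E. p x = mzero M \<longleftrightarrow> x \<in> i ` kq_carrier k"
begin

lemma E_zero: "mzero E \<in> mcarrier E" using E unfolding right_module_def by blast
lemma E_add: "x \<in> mcarrier E \<Longrightarrow> y \<in> mcarrier E \<Longrightarrow> madd E x y \<in> mcarrier E"
  using E unfolding right_module_def KQ_simps by (elim conjE) blast
lemma E_assoc: "x \<in> mcarrier E \<Longrightarrow> y \<in> mcarrier E \<Longrightarrow> z \<in> mcarrier E \<Longrightarrow>
  madd E (madd E x y) z = madd E x (madd E y z)"
  using E unfolding right_module_def KQ_simps by (elim conjE) blast
lemma E_comm: "x \<in> mcarrier E \<Longrightarrow> y \<in> mcarrier E \<Longrightarrow> madd E x y = madd E y x"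
  using E unfolding right_module_def KQ_simps by (elim conjE) blast
lemma E_lzero: "x \<in> mcarrier E \<Longrightarrow> madd E (mzero E) x = x"
  using E unfolding right_module_def KQ_simps by (elim conjE) blast
lemma E_inv: "x \<in> mcarrier E \<Longrightarrow> \<exists>y\<in>mcarrier E. madd E x y = mzero E"
  using E unfolding right_module_def KQ_simps by (elim conjE) blast
lemma E_smul: "x \<in> mcarrier E \<Longrightarrow> r \<in> kq_carrier k \<Longrightarrow> msmul E x r \<in> mcarrier E"
  using E unfolding right_module_def KQ_simps by (elim conjE) blast
lemma E_smul_add: "x \<in> mcarrier E \<Longrightarrow> y \<in> mcarrier E \<Longrightarrow> r \<in> kq_carrier k \<Longrightarrow>
    msmul E (madd E x y) r = madd E (msmul E x r) (msmul E y r)"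
  using E unfolding right_module_def KQ_simps by (elim conjE) blast
lemma E_add_smul: "x \<in> mcarrier E \<Longrightarrow> r \<in> kq_carrier k \<Longrightarrow> s \<in> kq_carrier k \<Longrightarrow>
    msmul E x (kq_add r s) = madd E (msmul E x r) (msmul E x s)"
  using E unfolding right_module_def KQ_simps by (elim conjE) blast
lemma E_smul_mult: "x \<in> mcarrier E \<Longrightarrow> r \<in> kq_carrier k \<Longrightarrow> s \<in> kq_carrier k \<Longrightarrow>
    msmul E x (kq_mult k r s) = msmul E (msmul E x r) s"
  using E unfolding right_module_def KQ_simps by (elim conjE) blast

definition EGr :: "'e monoid" where "EGr = \<lparr>carrier = mcarrier E, monoid.mult = madd E, one = mzero E\<rparr>"

lemma EGr_simps[simp]: "carrier EGr = mcarrier E" "monoid.mult EGr = madd E" "one EGr = mzero E"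
  by (simp_all add: EGr_def)

sublocale EG: comm_group EGr
proof (rule comm_groupI)
  fix x assume x: "x \<in> carrier EGr"
  then obtain y where y: "y \<in> mcarrier E" "madd E x y = mzero E" using E_inv by auto
  thus "\<exists>y\<in>carrier EGr. y \<otimes>\<^bsub>EGr\<^esub> x = \<one>\<^bsub>EGr\<^esub>" using E_comm[of x y] x by auto
qed (auto simp: E_add E_zero E_assoc E_lzero intro: E_comm)

lemma E_rzero: "x \<in> mcarrier E \<Longrightarrow> madd E x (mzero E) = x"
  using EG.r_one by simp

lemma E_cancel: "x \<in> mcarrier E \<Longrightarrow> a \<in> mcarrier E \<Longrightarrow> madd E x a = x \<Longrightarrow> a = mzero E"
  using EG.l_cancel_one[of x a] by simp

lemma E_smul_zero: "x \<in> mcarrier E \<Longrightarrow> msmul E x (\<lambda>_. 0) = mzero E"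
proof -
  assume x: "x \<in> mcarrier E"
  have z: "kq_add (\<lambda>_. 0) (\<lambda>_. 0) = (\<lambda>_. 0::'k)" by (simp add: kq_add_def)
  have "madd E (msmul E x (\<lambda>_. 0)) (msmul E x (\<lambda>_. 0)) = msmul E x (\<lambda>_. 0)"
    using E_add_smul[OF x kq_zero_closed kq_zero_closed] z by simp
  thus ?thesis using E_cancel E_smul[OF x kq_zero_closed] by blast
qed

lemma E_zero_smul: "r \<in> kq_carrier k \<Longrightarrow> msmul E (mzero E) r = mzero E"
proof -
  assume r: "r \<in> kq_carrier k"
  have "madd E (msmul E (mzero E) r) (msmul E (mzero E) r) = msmul E (mzero E) r"
    using E_smul_add[OF E_zero E_zero r] E_lzero[OF E_zero] by simp
  thus ?thesis using E_cancel E_smul[OF E_zero r] by blast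
qed

lemma i_closed: "r \<in> kq_carrier k \<Longrightarrow> i r \<in> mcarrier E"
  using ihom unfolding rmod_hom_def KQmod_def by simp
lemma i_add: "r \<in> kq_carrier k \<Longrightarrow> s \<in> kq_carrier k \<Longrightarrow> i (kq_add r s) = madd E (i r) (i s)"
  using ihom unfolding rmod_hom_def KQmod_def by simp
lemma i_smul: "r \<in> kq_carrier k \<Longrightarrow> s \<in> kq_carrier k \<Longrightarrow> i (kq_mult k r s) = msmul E (i r) s"
  using ihom unfolding rmod_hom_def KQmod_def by simp
lemma i_zero: "i (\<lambda>_. 0) = mzero E"
proof -
  have z: "kq_add (\<lambda>_. 0) (\<lambda>_. 0) = (\<lambda>_. 0::'k)" by (simp add: kq_add_def)
  have "madd E (i (\<lambda>_. 0)) (i (\<lambda>_. 0)) = i (\<lambda>_. 0)" using i_add[of "\<lambda>_. 0" "\<lambda>_. 0"] z by simp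
  thus ?thesis using E_cancel i_closed[OF kq_zero_closed] by blast
qed

lemma p_closed: "x \<in> mcarrier E \<Longrightarrow> p x \<in> mcarrier M"
  using phom unfolding rmod_hom_def by blast
lemma p_add: "x \<in> mcarrier E \<Longrightarrow> y \<in> mcarrier E \<Longrightarrow> p (madd E x y) = madd Q (p x) (p y)"
  using phom unfolding rmod_hom_def M_ops by blast
lemma p_smul: "x \<in> mcarrier E \<Longrightarrow> r \<in> kq_carrier k \<Longrightarrow> p (msmul E x r) = msmul Q (p x) r"
  using phom unfolding rmod_hom_def M_ops by simp
lemma p_i: "r \<in> kq_carrier k \<Longrightarrow> p (i r) = cs (\<lambda>_ _ _. 0)"
  using pker i_closed M_ops Q_zero by auto
lemma p_zero: "p (mzero E) = cs (\<lambda>_ _ _. 0)"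
  using p_i[OF kq_zero_closed] i_zero by simp


definition T :: "('w \<Rightarrow> nat \<Rightarrow> 'e) \<Rightarrow> ('w, 'k) Fel \<Rightarrow> 'e" where
  "T y x = finprod EGr (\<lambda>s. msmul E (y (fst s) (snd s)) (x (fst s) (snd s))) (suppF x)"

definition yc :: "('w \<Rightarrow> nat \<Rightarrow> 'e) \<Rightarrow> bool" where "yc y \<longleftrightarrow> (\<forall>\<xi> n. y \<xi> n \<in> mcarrier E)"

lemma T_fun: "yc y \<Longrightarrow> x \<in> F_carrier k \<Longrightarrow>
   (\<lambda>s. msmul E (y (fst s) (snd s)) (x (fst s) (snd s))) \<in> S \<rightarrow> carrier EGr"
  by (auto simp: yc_def intro!: E_smul F_carrierD(2)[of x k])

lemma T_ext:
  assumes y: "yc y" and x: "x \<in> F_carrier k" and S: "finite S" "suppF x \<subseteq> S"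
  shows "T y x = finprod EGr (\<lambda>s. msmul E (y (fst s) (snd s)) (x (fst s) (snd s))) S"
  unfolding T_def
proof (rule EG.finprod_mono_neutral_cong_left[OF S])
  fix s assume "s \<in> S - suppF x"
  hence "x (fst s) (snd s) = (\<lambda>_. 0)" by (auto simp: suppF_def split: prod.splits)
  thus "msmul E (y (fst s) (snd s)) (x (fst s) (snd s)) = \<one>\<^bsub>EGr\<^esub>"
    using E_smul_zero y by (simp add: yc_def)
qed (use T_fun[OF y x] in auto)

lemma T_closed: "yc y \<Longrightarrow> x \<in> F_carrier k \<Longrightarrow> T y x \<in> mcarrier E"
  unfolding T_def using EG.finprod_closed[OF T_fun] by simp

lemma T_zero: "T y (\<lambda>_ _ _. 0) = mzero E"
  unfolding T_def suppF_def by simp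

lemma T_add:
  assumes y: "yc y" and x: "x \<in> F_carrier k" and x': "x' \<in> F_carrier k"
  shows "T y (\<lambda>\<xi> n p. x \<xi> n p + x' \<xi> n p) = madd E (T y x) (T y x')"
proof -
  let ?S = "suppF x \<union> suppF x'"
  have fS: "finite ?S" using suppF_fin x x' by auto
  have xx: "(\<lambda>\<xi> n p. x \<xi> n p + x' \<xi> n p) \<in> F_carrier k" using F_add_closed[OF x x'] .
  have "T y (\<lambda>\<xi> n p. x \<xi> n p + x' \<xi> n p) = finprod EGr (\<lambda>s. msmul E (y (fst s) (snd s)) (\<lambda>p. x (fst s) (snd s) p + x' (fst s) (snd s) p)) ?S"
    by (rule T_ext[OF y xx fS]) (auto simp: suppF_def)
  also have "\<dots> = finprod EGr (\<lambda>s. msmul E (y (fst s) (snd s)) (x (fst s) (snd s)) \<otimes>\<^bsub>EGr\<^esub> msmul E (y (fst s) (snd s)) (x' (fst s) (snd s))) ?S"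
    using E_add_smul y F_carrierD(2)[OF x] F_carrierD(2)[OF x'] by (intro EG.finprod_cong') (auto simp: yc_def kq_add_def E_add E_smul)
  also have "\<dots> = finprod EGr (\<lambda>s. msmul E (y (fst s) (snd s)) (x (fst s) (snd s))) ?S \<otimes>\<^bsub>EGr\<^esub>
       finprod EGr (\<lambda>s. msmul E (y (fst s) (snd s)) (x' (fst s) (snd s))) ?S"
    by (rule EG.finprod_multf[OF T_fun[OF y x] T_fun[OF y x']])
  also have "\<dots> = madd E (T y x) (T y x')"
    using T_ext[OF y x fS] T_ext[OF y x' fS] by simp
  finally show ?thesis .
qed

lemma finprod_smul:
  assumes "finite S" "f \<in> S \<rightarrow> mcarrier E" "r \<in> kq_carrier k"
  shows "msmul E (finprod EGr f S) r = finprod EGr (\<lambda>s. msmul E (f s) r) S"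
  using assms
proof (induction S rule: finite_induct)
  case empty thus ?case using E_zero_smul by simp
next
  case (insert a S)
  have fS: "f \<in> S \<rightarrow> carrier EGr" "f a \<in> carrier EGr" using insert by auto
  have gS: "(\<lambda>s. msmul E (f s) r) \<in> S \<rightarrow> carrier EGr" "msmul E (f a) r \<in> carrier EGr"
    using insert E_smul by auto
  have "msmul E (finprod EGr f (insert a S)) r = msmul E (madd E (f a) (finprod EGr f S)) r"
    using EG.finprod_insert[OF insert(1,2) fS] by simp
  also have "\<dots> = madd E (msmul E (f a) r) (msmul E (finprod EGr f S) r)"
    using E_smul_add fS EG.finprod_closed[OF fS(1)] insert by simp
  also have "\<dots> = madd E (msmul E (f a) r) (finprod EGr (\<lambda>s. msmul E (f s) r) S)"
    using insert by auto
  also have "\<dots> = finprod EGr (\<lambda>s. msmul E (f s) r) (insert a S)"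
    using EG.finprod_insert[OF insert(1,2) gS] by simp
  finally show ?case .
qed

lemma T_smul:
  assumes y: "yc y" and x: "x \<in> F_carrier k" and r: "r \<in> kq_carrier k"
  shows "T y (\<lambda>\<xi> n. kq_mult k (x \<xi> n) r) = msmul E (T y x) r"
proof -
  have fS: "finite (suppF x)" using suppF_fin x by auto
  have xr: "(\<lambda>\<xi> n. kq_mult k (x \<xi> n) r) \<in> F_carrier k" using F_smul_closed[OF x r] .
  have "T y (\<lambda>\<xi> n. kq_mult k (x \<xi> n) r) = finprod EGr (\<lambda>s. msmul E (y (fst s) (snd s)) (kq_mult k (x (fst s) (snd s)) r)) (suppF x)"
    by (rule T_ext[OF y xr fS]) (auto simp: suppF_def)
  also have "\<dots> = finprod EGr (\<lambda>s. msmul E (msmul E (y (fst s) (snd s)) (x (fst s) (snd s))) r) (suppF x)"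
    using E_smul_mult y F_carrierD(2)[OF x] r by (intro EG.finprod_cong') (auto simp: yc_def E_smul)
  also have "\<dots> = msmul E (T y x) r"
    unfolding T_def by (rule finprod_smul[OF fS _ r, symmetric]) (use T_fun[OF y x] in auto)
  finally show ?thesis .
qed

lemma T_unitv:
  assumes y: "yc y" and c: "c \<in> kq_carrier k" and v: "valid \<xi> n"
  shows "T y (unitv \<xi> n c) = msmul E (y \<xi> n) c"
proof -
  have u: "unitv \<xi> n c \<in> F_carrier k" using unitv_F[OF c v] .
  have "T y (unitv \<xi> n c) = finprod EGr (\<lambda>s. msmul E (y (fst s) (snd s)) (unitv \<xi> n c (fst s) (snd s))) {(\<xi>, n)}"
    by (rule T_ext[OF y u]) (auto simp: suppF_def unitv_def split: if_splits)
  also have "\<dots> = msmul E (y \<xi> n) c"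
    using E_smul[OF _ c] y by (simp add: unitv_def yc_def E_rzero)
  finally show ?thesis .
qed


definition lifts :: "('w \<Rightarrow> nat \<Rightarrow> 'e) \<Rightarrow> bool" where
  "lifts y \<longleftrightarrow> yc y \<and> (\<forall>\<xi> n. valid \<xi> n \<longrightarrow> p (y \<xi> n) = cs (unitv \<xi> n kq_e0))"

lemma pT:
  assumes y: "lifts y" and x: "x \<in> F0 k"
  shows "p (T y x) = cs x"
proof (rule F0_induct[OF x, where P="\<lambda>x. p (T y x) = cs x"])
  show "p (T y (\<lambda>_ _ _. 0)) = cs (\<lambda>_ _ _. 0)" using T_zero p_zero by simp
next
  fix x :: "('w,'k) Fel" and \<xi> :: 'w and n and c :: "path \<Rightarrow> 'k"
  assume 2: "x \<in> F0 k" "p (T y x) = cs x" "c \<in> kq_carrier k" "valid \<xi> n" "c \<in> fz {p. fst p = 0}"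
  have yc: "yc y" using y lifts_def by blast
  have xF: "x \<in> F_carrier k" using F0_FD[OF 2(1)] .
  have uF: "unitv \<xi> n c \<in> F_carrier k" using unitv_F[OF 2(3,4)] .
  have u0F: "unitv \<xi> n kq_e0 \<in> F_carrier k" using unitv_F[OF kq_e0_closed 2(4)] .
  have yE: "y \<xi> n \<in> mcarrier E" using yc yc_def by blast
  have "T y (\<lambda>\<xi>' n' p. x \<xi>' n' p + unitv \<xi> n c \<xi>' n' p) = madd E (T y x) (msmul E (y \<xi> n) c)"
    using T_add[OF yc xF uF] T_unitv[OF yc 2(3,4)] by simp
  hence "p (T y (\<lambda>\<xi>' n' p. x \<xi>' n' p + unitv \<xi> n c \<xi>' n' p)) = madd Q (cs x) (msmul Q (cs (unitv \<xi> n kq_e0)) c)"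
    using p_add[OF T_closed[OF yc xF] E_smul[OF yE 2(3)]] p_smul[OF yE 2(3)] 2(2) y 2(4) lifts_def by simp
  also have "msmul Q (cs (unitv \<xi> n kq_e0)) c = cs (unitv \<xi> n c)"
    using Q_smul[OF u0F 2(3)] unitv_smul[of k \<xi> n kq_e0 c] e0_mult_fz[OF 2(5)] by simp
  also have "madd Q (cs x) (cs (unitv \<xi> n c)) = cs (\<lambda>\<xi>' n' p. x \<xi>' n' p + unitv \<xi> n c \<xi>' n' p)"
    using Q_add[OF xF uF] by simp
  finally show "p (T y (\<lambda>\<xi>' n' p. x \<xi>' n' p + unitv \<xi> n c \<xi>' n' p)) = cs (\<lambda>\<xi>' n' p. x \<xi>' n' p + unitv \<xi> n c \<xi>' n' p)" .
qed

definition y0 :: "'w \<Rightarrow> nat \<Rightarrow> 'e" where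
  "y0 \<xi> n = (if valid \<xi> n then SOME e. e \<in> mcarrier E \<and> p e = cs (unitv \<xi> n kq_e0) else mzero E)"

lemma lifts_y0: "lifts y0"
proof -
  have ex: "\<exists>e. e \<in> mcarrier E \<and> p e = cs (unitv \<xi> n kq_e0)" if v: "valid \<xi> n" for \<xi> n
  proof -
    have "cs (unitv \<xi> n kq_e0) \<in> mcarrier M"
      unfolding M_carrier_eq using unitv_F0[OF kq_e0_closed v e0_fz] by blast
    thus ?thesis unfolding psurj[symmetric] by auto
  qed
  have H: "(SOME e. e \<in> mcarrier E \<and> p e = cs (unitv \<xi> n kq_e0)) \<in> mcarrier E \<and>
      p (SOME e. e \<in> mcarrier E \<and> p e = cs (unitv \<xi> n kq_e0)) = cs (unitv \<xi> n kq_e0)" if "valid \<xi> n" for \<xi> n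
    using ex[OF that] by (rule someI_ex)
  have A: "y0 \<xi> n \<in> mcarrier E" for \<xi> n
    using H[of \<xi> n] E_zero unfolding y0_def by (cases "valid \<xi> n") simp_all
  have B: "p (y0 \<xi> n) = cs (unitv \<xi> n kq_e0)" if "valid \<xi> n" for \<xi> n
    using H[OF that] that unfolding y0_def by simp
  show ?thesis unfolding lifts_def yc_def using A B by blast
qed

lemma lifts_shift:
  assumes y: "lifts y" and t: "\<And>\<xi> n. t \<xi> n \<in> kq_carrier k"
  shows "lifts (\<lambda>\<xi> n. madd E (y \<xi> n) (i (t \<xi> n)))"
proof -
  have yE: "y \<xi> n \<in> mcarrier E" for \<xi> n using y unfolding lifts_def yc_def by blast
  have "p (madd E (y \<xi> n) (i (t \<xi> n))) = cs (unitv \<xi> n kq_e0)" if v: "valid \<xi> n" for \<xi> n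
  proof -
    have pe: "p (y \<xi> n) = cs (unitv \<xi> n kq_e0)" using y v unfolding lifts_def by blast
    have "p (madd E (y \<xi> n) (i (t \<xi> n))) = madd Q (p (y \<xi> n)) (p (i (t \<xi> n)))"
      by (rule p_add[OF yE i_closed[OF t]])
    also have "\<dots> = madd Q (cs (unitv \<xi> n kq_e0)) (cs (\<lambda>_ _ _. 0))"
      unfolding pe p_i[OF t] ..
    also have "\<dots> = cs (\<lambda>\<xi>' n' p. unitv \<xi> n kq_e0 \<xi>' n' p + 0)"
      by (rule Q_add[OF unitv_F[OF kq_e0_closed v] F_zero_closed])
    also have "\<dots> = cs (unitv \<xi> n kq_e0)" by simp
    finally show ?thesis .
  qed
  thus ?thesis unfolding lifts_def yc_def using E_add[OF yE i_closed[OF t]] by blast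
qed

definition good :: "('w \<Rightarrow> nat \<Rightarrow> 'e) \<Rightarrow> bool" where
  "good y \<longleftrightarrow> lifts y \<and> (\<forall>\<alpha> n. is_lim \<alpha> \<longrightarrow> T y (ladder_gen k \<zeta> \<alpha> n) = mzero E)"

lemma T_kernel:
  assumes g: "good y" and x: "x \<in> I"
  shows "T y x = mzero E"
proof -
  have yc: "yc y" using g unfolding good_def lifts_def by blast
  let ?K = "{x \<in> F_carrier k. T y x = mzero E}"
  have Ksub: "is_submodule (KQ k) (Fmod k) ?K"
    unfolding is_submodule_def
  proof (intro conjI ballI)
    fix a b assume a: "a \<in> ?K" and b: "b \<in> ?K"
    hence aF: "a \<in> F_carrier k" and bF: "b \<in> F_carrier k" by auto
    have "T y (madd (Fmod k) a b) = madd E (T y a) (T y b)" using T_add[OF yc aF bF] by simp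
    also have "\<dots> = mzero E" using a b E_rzero[OF E_zero] by simp
    finally show "madd (Fmod k) a b \<in> ?K" using F_add_closed[OF aF bF] by simp
  next
    fix a and r :: "path \<Rightarrow> 'k" assume a: "a \<in> ?K" and r: "r \<in> carrier (KQ k)"
    hence aF: "a \<in> F_carrier k" and r': "r \<in> kq_carrier k" by auto
    have "T y (msmul (Fmod k) a r) = msmul E (T y a) r" using T_smul[OF yc aF r'] by simp
    also have "\<dots> = mzero E" using a E_zero_smul[OF r'] by simp
    finally show "msmul (Fmod k) a r \<in> ?K" using F_smul_closed[OF aF r'] by simp
  next
    show "?K \<subseteq> mcarrier (Fmod k)" by auto
    show "mzero (Fmod k) \<in> ?K" using T_zero by simp
  qed
  have "G_sub k \<zeta> \<alpha> \<subseteq> ?K" if a: "is_lim \<alpha>" for \<alpha>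
    unfolding G_sub_def
  proof (rule gen_sub_least[OF Ksub])
    show "range (ladder_gen k \<zeta> \<alpha>) \<subseteq> ?K"
      using g a F0_FD[OF ladder_gen_F0[OF a]] unfolding good_def by blast
  qed
  hence "I \<subseteq> ?K" unfolding I_eq I_sub_def by (intro gen_sub_least[OF Ksub]) blast
  thus ?thesis using x by auto
qed

definition sp :: "('w \<Rightarrow> nat \<Rightarrow> 'e) \<Rightarrow> ('w, 'k) Fel set \<Rightarrow> 'e" where
  "sp y m = T y (SOME x. x \<in> F0 k \<and> cs x = m)"

lemma sp_cs:
  assumes g: "good y" and x: "x \<in> F0 k"
  shows "sp y (cs x) = T y x"
proof -
  have yc: "yc y" using g unfolding good_def lifts_def by blast
  define x0 where "x0 = (SOME x'. x' \<in> F0 k \<and> cs x' = cs x)"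
  have x0: "x0 \<in> F0 k \<and> cs x0 = cs x" unfolding x0_def by (rule someI[of _ x]) (use x in auto)
  then obtain j where j: "j \<in> I" "x = (\<lambda>\<xi> n p. x0 \<xi> n p + j \<xi> n p)" using cs_eqD by blast
  have "T y x = madd E (T y x0) (T y j)" unfolding j(2) by (rule T_add[OF yc]) (use x0 F0_FD I_F j in auto)
  also have "\<dots> = T y x0" using T_kernel[OF g j(1)] E_rzero T_closed[OF yc] x0 F0_FD by auto
  finally show ?thesis unfolding sp_def x0_def by simp
qed

lemma split_ok:
  assumes g: "good y"
  shows "rmod_hom (KQ k) M E (sp y) \<and> (\<forall>m\<in>mcarrier M. p (sp y m) = m)"
proof -
  have yc: "yc y" and ly: "lifts y" using g unfolding good_def lifts_def by blast+
  have F0s: "is_submodule (KQ k) (Fmod k) (F0 k :: ('w,'k) Fel set)" by (rule F0_is_submodule)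
  show ?thesis unfolding rmod_hom_def M_ops M_carrier_eq
  proof (intro conjI ballI)
    fix m assume "m \<in> cs ` F0 k"
    then obtain x where x: "x \<in> F0 k" "m = cs x" by blast
    have e: "sp y m = T y x" unfolding x(2) by (rule sp_cs[OF g x(1)])
    show "sp y m \<in> mcarrier E" unfolding e by (rule T_closed[OF yc F0_FD[OF x(1)]])
    show "p (sp y m) = m" unfolding e using pT[OF ly x(1)] x(2) by simp
  next
    fix m m' assume "m \<in> cs ` F0 k" "m' \<in> cs ` F0 k"
    then obtain x x' where x: "x \<in> F0 k" "m = cs x" "x' \<in> F0 k" "m' = cs x'" by blast
    have xx: "madd (Fmod k) x x' \<in> F0 k" using F0s x(1,3) unfolding is_submodule_def by blast
    have e: "madd Q m m' = cs (madd (Fmod k) x x')" unfolding x(2,4) Fmod_simps by (rule Q_add[OF F0_FD[OF x(1)] F0_FD[OF x(3)]])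
    have "sp y (madd Q m m') = T y (madd (Fmod k) x x')" unfolding e by (rule sp_cs[OF g xx])
    also have "\<dots> = madd E (T y x) (T y x')" unfolding Fmod_simps by (rule T_add[OF yc F0_FD[OF x(1)] F0_FD[OF x(3)]])
    also have "\<dots> = madd E (sp y m) (sp y m')" unfolding x(2,4) sp_cs[OF g x(1)] sp_cs[OF g x(3)] ..
    finally show "sp y (madd Q m m') = madd E (sp y m) (sp y m')" .
  next
    fix m and r :: "path \<Rightarrow> 'k" assume "m \<in> cs ` F0 k" "r \<in> carrier (KQ k)"
    then obtain x where x: "x \<in> F0 k" "m = cs x" and r: "r \<in> kq_carrier k" by auto
    have xx: "msmul (Fmod k) x r \<in> F0 k" using F0s x(1) r unfolding is_submodule_def by simp
    have e: "msmul Q m r = cs (msmul (Fmod k) x r)" unfolding x(2) Fmod_simps by (rule Q_smul[OF F0_FD[OF x(1)] r])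
    have "sp y (msmul Q m r) = T y (msmul (Fmod k) x r)" unfolding e by (rule sp_cs[OF g xx])
    also have "\<dots> = msmul E (T y x) r" unfolding Fmod_simps by (rule T_smul[OF yc F0_FD[OF x(1)] r])
    also have "\<dots> = msmul E (sp y m) r" unfolding x(2) sp_cs[OF g x(1)] ..
    finally show "sp y (msmul Q m r) = msmul E (sp y m) r" .
  qed
qed

end


primrec hh :: "nat \<Rightarrow> (nat \<Rightarrow> path \<Rightarrow> 'k::field) \<Rightarrow> nat \<Rightarrow> nat \<Rightarrow> path \<Rightarrow> 'k" where
  "hh k S N 0 = (\<lambda>_. 0)"
| "hh k S N (Suc j) = kq_add (S (N - Suc j)) (kq_mult k (hh k S N j) (kq_cycle k))"

definition ends0 :: "nat \<Rightarrow> (path \<Rightarrow> 'k::field) \<Rightarrow> bool" where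
  "ends0 k X \<longleftrightarrow> (\<forall>p. X p \<noteq> 0 \<longrightarrow> ptgt k p = 0)"

lemma ends0D: "ends0 k X \<Longrightarrow> X p \<noteq> 0 \<Longrightarrow> ptgt k p = 0"
  unfolding ends0_def by (erule allE) (erule mp)

lemma ends0I: "(\<And>p. X p \<noteq> 0 \<Longrightarrow> ptgt k p = 0) \<Longrightarrow> ends0 k X"
  unfolding ends0_def by (intro allI impI)

lemma ends0_iff: "ends0 k X \<longleftrightarrow> kq_mult k X kq_e0 = X"
proof
  assume h: "ends0 k X"
  show "kq_mult k X kq_e0 = X"
  proof (rule ext)
    fix p
    show "kq_mult k X kq_e0 p = X p"
    proof (cases "ptgt k p = 0")
      case False
      hence "X p = 0" using ends0D[of k X p] h by metis
      thus ?thesis by (simp add: kq_mult_e0_right)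
    qed (simp add: kq_mult_e0_right)
  qed
next
  assume h: "kq_mult k X kq_e0 = X"
  show "ends0 k X"
  proof (rule ends0I)
    fix p assume "X p \<noteq> 0"
    hence "kq_mult k X kq_e0 p \<noteq> 0" unfolding h .
    thus "ptgt k p = 0" unfolding kq_mult_e0_right by (simp split: if_splits)
  qed
qed

lemma hh_closed: "(\<And>m. S m \<in> kq_carrier k) \<Longrightarrow> hh k S N j \<in> kq_carrier k"
proof (induction j)
  case (Suc j)
  thus ?case by (simp only: hh.simps) (rule kq_add_closed[OF Suc.prems kq_mult_closed[OF Suc.IH[OF Suc.prems] kq_cycle_closed]])
qed simp

lemma hh_ends0: "(\<And>m. ends0 k (S m)) \<Longrightarrow> ends0 k (hh k S N j)"
proof (induction j)
  case 0 show ?case by (rule ends0I) simp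
next
  case (Suc j)
  have h1: "ends0 k (kq_mult k (hh k S N j) (kq_cycle k))"
  proof (rule ends0I)
    fix p assume "kq_mult k (hh k S N j) (kq_cycle k) p \<noteq> 0"
    then obtain q where "p = cat q (0, cyc_list k)" using mult_cycle_nz by blast
    thus "ptgt k p = 0" using ptgt_cat_cyc by simp
  qed
  have h2: "ends0 k (S (N - Suc j))" by (rule Suc.prems)
  show ?case unfolding hh.simps kq_add_def
  proof (rule ends0I)
    fix p assume "S (N - Suc j) p + kq_mult k (hh k S N j) (kq_cycle k) p \<noteq> 0"
    hence "S (N - Suc j) p \<noteq> 0 \<or> kq_mult k (hh k S N j) (kq_cycle k) p \<noteq> 0" by auto
    thus "ptgt k p = 0" using ends0D[OF h1, of p] ends0D[OF h2, of p] by blast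
  qed
qed

lemma hh_rec:
  assumes "\<And>m. m \<ge> N \<Longrightarrow> S m = (\<lambda>_. 0)"
  shows "hh k S N (N - n) = kq_add (S n) (kq_mult k (hh k S N (N - Suc n)) (kq_cycle k))"
proof (cases "n < N")
  case True
  hence "N - n = Suc (N - Suc n)" by simp
  moreover have "N - Suc (N - Suc n) = n" using True by simp
  ultimately show ?thesis by simp
next
  case False
  thus ?thesis using assms[of n] by (simp add: kq_add_def)
qed

context extctx begin

definition D :: "'w \<Rightarrow> nat \<Rightarrow> 'e" where "D \<alpha> n = T y0 (ladder_gen k \<zeta> \<alpha> n)"

definition rr :: "'w \<Rightarrow> nat \<Rightarrow> path \<Rightarrow> 'k" where
  "rr \<alpha> n = (SOME r. r \<in> kq_carrier k \<and> D \<alpha> n = i r)"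

definition nege0 :: "path \<Rightarrow> 'k" where "nege0 = (\<lambda>p. - kq_e0 p)"

lemma nege0_closed: "nege0 \<in> kq_carrier k" unfolding nege0_def by (rule kq_neg_closed) simp

lemma T_lg:
  assumes y: "yc y" and a: "is_lim \<alpha>"
  shows "T y (ladder_gen k \<zeta> \<alpha> n) = madd E (madd E (msmul E (y (\<zeta> \<alpha> n) 0) kq_e0) (msmul E (y \<alpha> n) nege0))
      (msmul E (y \<alpha> (Suc n)) (kq_cycle k))"
proof -
  have v: "valid (\<zeta> \<alpha> n) 0" "valid \<alpha> n" "valid \<alpha> (Suc n)" using a by (auto simp: valid_def)
  have u1: "unitv (\<zeta> \<alpha> n) 0 kq_e0 \<in> F_carrier k" by (rule unitv_F[OF kq_e0_closed v(1)])
  have u2: "unitv \<alpha> n nege0 \<in> F_carrier k" by (rule unitv_F[OF nege0_closed v(2)])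
  have u3: "unitv \<alpha> (Suc n) (kq_cycle k) \<in> F_carrier k" by (rule unitv_F[OF kq_cycle_closed v(3)])
  have u12: "(\<lambda>\<xi> m p. unitv (\<zeta> \<alpha> n) 0 kq_e0 \<xi> m p + unitv \<alpha> n nege0 \<xi> m p) \<in> F_carrier k"
    by (rule F_add_closed[OF u1 u2])
  have "T y (ladder_gen k \<zeta> \<alpha> n) = T y (\<lambda>\<xi> m p. (\<lambda>\<xi> m p. unitv (\<zeta> \<alpha> n) 0 kq_e0 \<xi> m p + unitv \<alpha> n nege0 \<xi> m p) \<xi> m p
        + unitv \<alpha> (Suc n) (kq_cycle k) \<xi> m p)"
    unfolding ladder_gen_eq nege0_def by simp
  also have "\<dots> = madd E (T y (\<lambda>\<xi> m p. unitv (\<zeta> \<alpha> n) 0 kq_e0 \<xi> m p + unitv \<alpha> n nege0 \<xi> m p)) (T y (unitv \<alpha> (Suc n) (kq_cycle k)))"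
    by (rule T_add[OF y u12 u3])
  also have "\<dots> = madd E (madd E (T y (unitv (\<zeta> \<alpha> n) 0 kq_e0)) (T y (unitv \<alpha> n nege0))) (T y (unitv \<alpha> (Suc n) (kq_cycle k)))"
    unfolding T_add[OF y u1 u2] ..
  also have "\<dots> = madd E (madd E (msmul E (y (\<zeta> \<alpha> n) 0) kq_e0) (msmul E (y \<alpha> n) nege0))
      (msmul E (y \<alpha> (Suc n)) (kq_cycle k))"
    unfolding T_unitv[OF y kq_e0_closed v(1)] T_unitv[OF y nege0_closed v(2)] T_unitv[OF y kq_cycle_closed v(3)] ..
  finally show ?thesis .
qed

lemma yc_y0: "yc y0" using lifts_y0 unfolding lifts_def by blast

lemma rr_prop:
  assumes a: "is_lim \<alpha>"
  shows "rr \<alpha> n \<in> kq_carrier k \<and> D \<alpha> n = i (rr \<alpha> n)"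
proof -
  have lF0: "ladder_gen k \<zeta> \<alpha> n \<in> F0 k" by (rule ladder_gen_F0[OF a])
  have DE: "D \<alpha> n \<in> mcarrier E" unfolding D_def by (rule T_closed[OF yc_y0 F0_FD[OF lF0]])
  have "p (D \<alpha> n) = cs (ladder_gen k \<zeta> \<alpha> n)" unfolding D_def by (rule pT[OF lifts_y0 lF0])
  also have "\<dots> = mzero M" unfolding cs_I[OF ladder_gen_I[OF a]] M_ops Q_zero ..
  finally have "D \<alpha> n \<in> i ` kq_carrier k" using pker DE by blast
  hence "\<exists>r. r \<in> kq_carrier k \<and> D \<alpha> n = i r" by blast
  thus ?thesis unfolding rr_def by (rule someI_ex)
qed

lemma rr_ends0:
  assumes a: "is_lim \<alpha>"
  shows "ends0 k (rr \<alpha> n)"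
proof -
  have r: "rr \<alpha> n \<in> kq_carrier k" "D \<alpha> n = i (rr \<alpha> n)" using rr_prop[OF a] by auto
  have yE: "y0 \<xi> m \<in> mcarrier E" for \<xi> m using yc_y0 unfolding yc_def by blast
  let ?a = "msmul E (y0 (\<zeta> \<alpha> n) 0) kq_e0" and ?b = "msmul E (y0 \<alpha> n) nege0"
    and ?c = "msmul E (y0 \<alpha> (Suc n)) (kq_cycle k)"
  have aE: "?a \<in> mcarrier E" "?b \<in> mcarrier E" "?c \<in> mcarrier E"
    using E_smul yE nege0_closed by auto
  have ne: "kq_mult k nege0 kq_e0 = nege0" unfolding nege0_def kq_mult_neg_left e0_e0 ..
  have sa: "msmul E ?a kq_e0 = ?a" using E_smul_mult[OF yE kq_e0_closed kq_e0_closed] unfolding e0_e0 by (rule sym)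
  have sb: "msmul E ?b kq_e0 = ?b" using E_smul_mult[OF yE nege0_closed kq_e0_closed] unfolding ne by (rule sym)
  have sc: "msmul E ?c kq_e0 = ?c" using E_smul_mult[OF yE kq_cycle_closed kq_e0_closed] unfolding cycle_e0 by (rule sym)
  have DD: "D \<alpha> n = madd E (madd E ?a ?b) ?c" unfolding D_def by (rule T_lg[OF yc_y0 a])
  have "msmul E (D \<alpha> n) kq_e0 = D \<alpha> n"
    unfolding DD E_smul_add[OF E_add[OF aE(1,2)] aE(3) kq_e0_closed] E_smul_add[OF aE(1,2) kq_e0_closed] sa sb sc ..
  hence "i (kq_mult k (rr \<alpha> n) kq_e0) = i (rr \<alpha> n)" using i_smul[OF r(1) kq_e0_closed] r(2) by simp
  hence "kq_mult k (rr \<alpha> n) kq_e0 = rr \<alpha> n"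
    using inj_onD[OF iinj] kq_mult_closed[OF r(1) kq_e0_closed] r(1) by blast
  thus ?thesis unfolding ends0_iff .
qed


lemma E_rearr:
  assumes "a \<in> mcarrier E" "b \<in> mcarrier E" "c \<in> mcarrier E" "d \<in> mcarrier E" "e \<in> mcarrier E" "f \<in> mcarrier E"
  shows "madd E (madd E (madd E a b) (madd E c d)) (madd E e f) = madd E (madd E (madd E a c) e) (madd E (madd E b d) f)"
proof -
  have "(a \<otimes>\<^bsub>EGr\<^esub> b \<otimes>\<^bsub>EGr\<^esub> (c \<otimes>\<^bsub>EGr\<^esub> d)) \<otimes>\<^bsub>EGr\<^esub> (e \<otimes>\<^bsub>EGr\<^esub> f) =
        (a \<otimes>\<^bsub>EGr\<^esub> c \<otimes>\<^bsub>EGr\<^esub> e) \<otimes>\<^bsub>EGr\<^esub> (b \<otimes>\<^bsub>EGr\<^esub> d \<otimes>\<^bsub>EGr\<^esub> f)"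
  proof -
    have A: "a \<in> carrier EGr" "b \<in> carrier EGr" "c \<in> carrier EGr" "d \<in> carrier EGr" "e \<in> carrier EGr" "f \<in> carrier EGr"
      using assms by simp_all
    show ?thesis using A by (simp add: EG.m_ac del: EGr_simps)
  qed
  thus ?thesis by simp
qed

lemma smul_shift:
  assumes "y \<in> mcarrier E" "t \<in> kq_carrier k" "r \<in> kq_carrier k"
  shows "msmul E (madd E y (i t)) r = madd E (msmul E y r) (i (kq_mult k t r))"
  using E_smul_add[OF assms(1) i_closed[OF assms(2)] assms(3)] i_smul[OF assms(2,3)] by simp

lemma exists_good:
  assumes nonlim: "\<And>\<alpha> n. is_lim \<alpha> \<Longrightarrow> \<not> is_lim (\<zeta> \<alpha> n)"
    and f: "\<And>\<gamma>. f \<gamma> \<in> kq_carrier k"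
    and N: "\<And>\<alpha> n. is_lim \<alpha> \<Longrightarrow> N \<alpha> \<le> n \<Longrightarrow> f (\<zeta> \<alpha> n) = rr \<alpha> n"
  shows "\<exists>y. good y"
proof -
  define ss where "ss \<alpha> n = kq_add (rr \<alpha> n) (\<lambda>q. - kq_mult k (f (\<zeta> \<alpha> n)) kq_e0 q)" for \<alpha> n
  define tt where "tt \<xi> n = (if is_lim \<xi> then hh k (ss \<xi>) (N \<xi>) (N \<xi> - n) else (\<lambda>q. - f \<xi> q))" for \<xi> n
  define y where "y \<xi> n = madd E (y0 \<xi> n) (i (tt \<xi> n))" for \<xi> n
  have fe: "kq_mult k (f \<gamma>) kq_e0 \<in> kq_carrier k" for \<gamma> by (rule kq_mult_closed[OF f kq_e0_closed])
  have ss_c: "ss \<alpha> n \<in> kq_carrier k" if a: "is_lim \<alpha>" for \<alpha> n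
    unfolding ss_def by (rule kq_add_closed[OF conjunct1[OF rr_prop[OF a]] kq_neg_closed[OF fe]])
  have ss_z: "ss \<alpha> n = (\<lambda>_. 0)" if a: "is_lim \<alpha>" and n: "N \<alpha> \<le> n" for \<alpha> n
  proof -
    have "kq_mult k (rr \<alpha> n) kq_e0 = rr \<alpha> n" using rr_ends0[OF a] unfolding ends0_iff .
    thus ?thesis unfolding ss_def N[OF a n] by (simp add: kq_add_def)
  qed
  have ss_e: "ends0 k (ss \<alpha> n)" if a: "is_lim \<alpha>" for \<alpha> n
  proof (rule ends0I)
    fix q assume "ss \<alpha> n q \<noteq> 0"
    hence "rr \<alpha> n q \<noteq> 0 \<or> kq_mult k (f (\<zeta> \<alpha> n)) kq_e0 q \<noteq> 0" unfolding ss_def kq_add_def by auto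
    thus "ptgt k q = 0" using ends0D[OF rr_ends0[OF a], of n q] by (auto simp: kq_mult_e0_right split: if_splits)
  qed
  have tt_c: "tt \<xi> n \<in> kq_carrier k" for \<xi> n
    unfolding tt_def using hh_closed[of "ss \<xi>"] ss_c kq_neg_closed[OF f] by auto
  have tt_rec: "tt \<alpha> n = kq_add (ss \<alpha> n) (kq_mult k (tt \<alpha> (Suc n)) (kq_cycle k))" if a: "is_lim \<alpha>" for \<alpha> n
    unfolding tt_def using a hh_rec[of "N \<alpha>" "ss \<alpha>" k n] ss_z[OF a] by simp
  have tt_e: "kq_mult k (tt \<alpha> n) kq_e0 = tt \<alpha> n" if a: "is_lim \<alpha>" for \<alpha> n
    unfolding ends0_iff[symmetric] tt_def using a hh_ends0[of k "ss \<alpha>"] ss_e[OF a] by simp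
  have ly: "lifts y" unfolding y_def by (rule lifts_shift[OF lifts_y0 tt_c])
  have yc: "yc y" using ly unfolding lifts_def by blast
  have y0E: "y0 \<xi> n \<in> mcarrier E" for \<xi> n using yc_y0 unfolding yc_def by blast
  have "T y (ladder_gen k \<zeta> \<alpha> n) = mzero E" if a: "is_lim \<alpha>" for \<alpha> n
  proof -
    let ?z = "\<zeta> \<alpha> n"
    let ?A = "msmul E (y0 ?z 0) kq_e0" and ?B = "msmul E (y0 \<alpha> n) nege0" and ?C = "msmul E (y0 \<alpha> (Suc n)) (kq_cycle k)"
    let ?tA = "kq_mult k (tt ?z 0) kq_e0" and ?tB = "kq_mult k (tt \<alpha> n) nege0" and ?tC = "kq_mult k (tt \<alpha> (Suc n)) (kq_cycle k)"
    have ABC: "?A \<in> mcarrier E" "?B \<in> mcarrier E" "?C \<in> mcarrier E" using E_smul y0E nege0_closed by auto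
    have tABC: "?tA \<in> kq_carrier k" "?tB \<in> kq_carrier k" "?tC \<in> kq_carrier k"
      by (rule kq_mult_closed[OF tt_c kq_e0_closed], rule kq_mult_closed[OF tt_c nege0_closed],
          rule kq_mult_closed[OF tt_c kq_cycle_closed])
    have "T y (ladder_gen k \<zeta> \<alpha> n) = madd E (madd E (madd E ?A (i ?tA)) (madd E ?B (i ?tB))) (madd E ?C (i ?tC))"
      unfolding T_lg[OF yc a] y_def smul_shift[OF y0E tt_c kq_e0_closed] smul_shift[OF y0E tt_c nege0_closed]
        smul_shift[OF y0E tt_c kq_cycle_closed] ..
    also have "\<dots> = madd E (madd E (madd E ?A ?B) ?C) (madd E (madd E (i ?tA) (i ?tB)) (i ?tC))"
      by (rule E_rearr) (use ABC tABC i_closed in auto)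
    also have "madd E (madd E ?A ?B) ?C = i (rr \<alpha> n)"
      using T_lg[OF yc_y0 a, of n] rr_prop[OF a, of n] unfolding D_def by simp
    also have "madd E (madd E (i ?tA) (i ?tB)) (i ?tC) = i (kq_add (kq_add ?tA ?tB) ?tC)"
      unfolding i_add[OF kq_add_closed[OF tABC(1) tABC(2)] tABC(3)] i_add[OF tABC(1) tABC(2)] ..
    also have "madd E (i (rr \<alpha> n)) (i (kq_add (kq_add ?tA ?tB) ?tC)) = i (kq_add (rr \<alpha> n) (kq_add (kq_add ?tA ?tB) ?tC))"
      unfolding i_add[OF conjunct1[OF rr_prop[OF a, of n]] kq_add_closed[OF kq_add_closed[OF tABC(1) tABC(2)] tABC(3)]] ..
    also have "kq_add (rr \<alpha> n) (kq_add (kq_add ?tA ?tB) ?tC) = (\<lambda>_. 0)"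
    proof -
      have t1: "tt ?z 0 = (\<lambda>q. - f ?z q)" unfolding tt_def using nonlim[OF a] by simp
      have e1: "?tA = (\<lambda>q. - kq_mult k (f ?z) kq_e0 q)" unfolding t1 kq_mult_neg_left ..
      have e2: "?tB = (\<lambda>q. - tt \<alpha> n q)" unfolding nege0_def kq_mult_neg_right tt_e[OF a] ..
      have e3: "tt \<alpha> n = kq_add (ss \<alpha> n) ?tC" by (rule tt_rec[OF a])
      show ?thesis unfolding e1 e2 unfolding e3 by (simp add: kq_add_def ss_def fun_eq_iff)
    qed
    finally show ?thesis using i_zero by simp
  qed
  hence "good y" unfolding good_def using ly by blast
  thus ?thesis by blast
qed

end


lemma is_subD: assumes "is_submodule R M N"
  shows "mzero M \<in> N" "x \<in> N \<Longrightarrow> y \<in> N \<Longrightarrow> madd M x y \<in> N"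
    "x \<in> N \<Longrightarrow> r \<in> carrier R \<Longrightarrow> msmul M x r \<in> N" "N \<subseteq> mcarrier M"
  using assms unfolding is_submodule_def by auto

lemma submod_simps: "mcarrier (submod M N) = N" "madd (submod M N) = madd M"
  "mzero (submod M N) = mzero M" "msmul (submod M N) = msmul M"
  by (simp_all add: submod_def)

lemma F0_module: "right_module (KQ k) (submod (Fmod k) (F0 k) :: (('w::wellorder, 'k::field) Fel, path \<Rightarrow> 'k) rmod)"
proof -
  have S: "is_submodule (KQ k) (Fmod k) (F0 k :: ('w, 'k) Fel set)" by (rule F0_is_submodule)
  have neg: "Fneg x \<in> F0 k" if "x \<in> F0 k" for x :: "('w, 'k) Fel"
    by (rule F0I[OF F_neg_closed[OF F0_FD[OF that]]]) (use F0D[OF that] in \<open>auto simp: Fneg_def\<close>)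
  have c: "x \<xi> n \<in> kq_carrier k" if "x \<in> F0 k" for x :: "('w, 'k) Fel" and \<xi> n
    by (rule F_carrierD(2)[OF F0_FD[OF that]])
  have A1: "msmul (Fmod k) (madd (Fmod k) x y) r = madd (Fmod k) (msmul (Fmod k) x r) (msmul (Fmod k) y r)"
    if x: "x \<in> F0 k" and y: "y \<in> F0 k" and r: "r \<in> kq_carrier k" for x y :: "('w, 'k) Fel" and r
  proof -
    have "kq_mult k (\<lambda>p. x \<xi> n p + y \<xi> n p) r = (\<lambda>p. kq_mult k (x \<xi> n) r p + kq_mult k (y \<xi> n) r p)" for \<xi> n
      using kq_mult_add_left[OF c[OF x] c[OF y] r] unfolding kq_add_def .
    thus ?thesis unfolding Fmod_simps by (intro ext) simp
  qed
  have A2: "msmul (Fmod k) x (kq_add r s) = madd (Fmod k) (msmul (Fmod k) x r) (msmul (Fmod k) x s)"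
    if x: "x \<in> F0 k" and r: "r \<in> kq_carrier k" and s: "s \<in> kq_carrier k" for x :: "('w, 'k) Fel" and r s
  proof -
    have "kq_mult k (x \<xi> n) (kq_add r s) = (\<lambda>p. kq_mult k (x \<xi> n) r p + kq_mult k (x \<xi> n) s p)" for \<xi> n
      using kq_mult_add_right[OF r s c[OF x]] unfolding kq_add_def .
    thus ?thesis unfolding Fmod_simps by (intro ext) simp
  qed
  have A3: "msmul (Fmod k) x (kq_mult k r s) = msmul (Fmod k) (msmul (Fmod k) x r) s"
    if x: "x \<in> F0 k" and r: "r \<in> kq_carrier k" and s: "s \<in> kq_carrier k" for x :: "('w, 'k) Fel" and r s
    unfolding Fmod_simps kq_mult_assoc[OF c[OF x] r s] ..
  have A4: "msmul (Fmod k) x (kq_one k) = x" if x: "x \<in> F0 k" for x :: "('w, 'k) Fel"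
    unfolding Fmod_simps kq_mult_one_right[OF c[OF x]] ..
  have A5: "madd (Fmod k) (madd (Fmod k) x y) z = madd (Fmod k) x (madd (Fmod k) y z)" for x y z :: "('w, 'k) Fel"
    unfolding Fmod_simps by (simp add: add.assoc)
  have A6: "madd (Fmod k) x y = madd (Fmod k) y x" for x y :: "('w, 'k) Fel"
    unfolding Fmod_simps by (simp add: add.commute)
  have A7: "madd (Fmod k) (mzero (Fmod k)) x = x" for x :: "('w, 'k) Fel"
    unfolding Fmod_simps by simp
  have A8: "\<exists>y\<in>F0 k. madd (Fmod k) x y = mzero (Fmod k)" if x: "x \<in> F0 k" for x :: "('w, 'k) Fel"
    by (rule bexI[OF _ neg[OF x]]) (simp add: Fneg_def)
  have S': "mzero (Fmod k) \<in> (F0 k :: ('w, 'k) Fel set)" "\<And>x y. x \<in> (F0 k :: ('w, 'k) Fel set) \<Longrightarrow> y \<in> F0 k \<Longrightarrow> madd (Fmod k) x y \<in> F0 k"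
     "\<And>x r. x \<in> (F0 k :: ('w, 'k) Fel set) \<Longrightarrow> r \<in> kq_carrier k \<Longrightarrow> msmul (Fmod k) x r \<in> F0 k"
    using is_subD[OF S] by auto
  show ?thesis unfolding right_module_def submod_simps KQ_simps
    apply (intro conjI ballI)
    apply (rule S'(1))
    apply (rule S'(2); assumption)
    apply (rule A5)
    apply (rule A6)
    apply (rule A7)
    apply (rule A8; assumption)
    apply (rule S'(3); assumption)
    apply (rule A1; assumption)
    apply (rule A2; assumption)
    apply (rule A3; assumption)
    apply (rule A4; assumption)
    done
qed

lemma cyc_descent:
  assumes w: "\<And>n. w n = kq_mult k (w (Suc n)) (kq_cycle k)"
  shows "w n = (\<lambda>_. 0)"
proof -
  have L: "\<forall>n p. w n p \<noteq> 0 \<longrightarrow> j * Suc k \<le> length (snd p)" for j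
  proof (induction j)
    case (Suc j)
    show ?case
    proof (intro allI impI)
      fix n p assume "w n p \<noteq> 0"
      hence "kq_mult k (w (Suc n)) (kq_cycle k) p \<noteq> 0" using w[of n] by simp
      then obtain q where q: "w (Suc n) q \<noteq> 0" "p = cat q (0, cyc_list k)" using mult_cycle_nz by blast
      have "j * Suc k \<le> length (snd q)" using Suc q(1) by blast
      moreover have "length (snd p) = length (snd q) + Suc k" using q(2) by (simp add: cat_def)
      ultimately show "Suc j * Suc k \<le> length (snd p)" by simp
    qed
  qed simp
  show ?thesis
  proof (rule ext, rule ccontr)
    fix p assume "w n p \<noteq> 0"
    hence "Suc (length (snd p)) * Suc k \<le> length (snd p)" using L by blast
    thus False by (simp add: algebra_simps)
  qed
qed

definition cpow :: "nat \<Rightarrow> nat \<Rightarrow> path" where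
  "cpow k m = (0, concat (replicate m (cyc_list k)))"

lemma last_concat_rep: "L \<noteq> [] \<Longrightarrow> last (concat (replicate (Suc j) L)) = last L"
  by (induction j) (auto simp: last_append)

lemma last_cyc: "last (cyc_list k) = k" "cyc_list k \<noteq> []"
  by (simp_all add: cyc_list_def)

lemma ptgt_cpow: "ptgt k (cpow k m) = 0"
proof (cases m)
  case (Suc j)
  have "last (concat (replicate m (cyc_list k))) = k"
    using Suc last_concat_rep[OF last_cyc(2), of j] last_cyc(1) by simp
  moreover have "concat (replicate m (cyc_list k)) \<noteq> []" using Suc last_cyc(2) by simp
  ultimately show ?thesis unfolding ptgt_def cpow_def by (simp add: cyc_tgt_def)
qed (simp add: ptgt_def cpow_def)

lemma cpow_Suc: "cpow k (Suc m) = (0, cyc_list k @ snd (cpow k m))"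
  by (simp add: cpow_def)

lemma fst_cpow[simp]: "fst (cpow k m) = 0" by (simp add: cpow_def)

lemma cycle_mult_cpow: "kq_mult k (kq_cycle k) Y (cpow k (Suc m)) = Y (cpow k m)"
  unfolding cpow_Suc using cycle_mult_at[of k Y "snd (cpow k m)"] by (simp add: cpow_def)

definition Lam :: "nat \<Rightarrow> 'w \<Rightarrow> ('w, 'k::field) Fel \<Rightarrow> 'k" where
  "Lam k \<alpha> x = (\<Sum>m\<in>{m. x \<alpha> m \<noteq> (\<lambda>_. 0)}. x \<alpha> m (cpow k m))"

lemma slot_fin: "x \<in> F_carrier k \<Longrightarrow> finite {m. x \<alpha> m \<noteq> (\<lambda>_. 0)}"
proof -
  assume x: "x \<in> F_carrier k"
  have "{m. x \<alpha> m \<noteq> (\<lambda>_. 0)} \<subseteq> snd ` {(\<xi>, n). x \<xi> n \<noteq> (\<lambda>_. 0)}" by (auto simp: image_iff)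
  thus ?thesis using F_carrierD(1)[OF x] by (meson finite_imageI finite_subset)
qed

lemma Lam_ext:
  assumes "finite S" "{m. x \<alpha> m \<noteq> (\<lambda>_. 0)} \<subseteq> S"
  shows "Lam k \<alpha> x = (\<Sum>m\<in>S. x \<alpha> m (cpow k m))"
  unfolding Lam_def by (rule sum.mono_neutral_left) (use assms in auto)

lemma Lam_add:
  assumes x: "x \<in> F_carrier k" and y: "y \<in> F_carrier k"
  shows "Lam k \<alpha> (\<lambda>\<xi> n p. x \<xi> n p + y \<xi> n p) = Lam k \<alpha> x + Lam k \<alpha> y"
proof -
  let ?S = "{m. x \<alpha> m \<noteq> (\<lambda>_. 0)} \<union> {m. y \<alpha> m \<noteq> (\<lambda>_. 0)}"
  have f: "finite ?S" using slot_fin x y by auto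
  have "Lam k \<alpha> (\<lambda>\<xi> n p. x \<xi> n p + y \<xi> n p) = (\<Sum>m\<in>?S. x \<alpha> m (cpow k m) + y \<alpha> m (cpow k m))"
    by (rule Lam_ext[OF f]) auto
  also have "\<dots> = Lam k \<alpha> x + Lam k \<alpha> y"
    by (simp add: sum.distrib Lam_ext[OF f])
  finally show ?thesis .
qed

lemma Lam_zero[simp]: "Lam k \<alpha> (\<lambda>_ _ _. 0) = 0" by (simp add: Lam_def)


definition nege0 :: "path \<Rightarrow> 'k::field" where "nege0 = (\<lambda>p. - kq_e0 p)"

lemma nege0_closed[simp]: "nege0 \<in> kq_carrier k" unfolding nege0_def by (rule kq_neg_closed) simp

lemma nege0_fz: "nege0 \<in> fz {p. fst p = 0}" unfolding nege0_def by (rule negate_fz[OF e0_fz])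

lemma nege0_mult_cpow: "kq_mult k nege0 r (cpow k m) = - r (cpow k m)"
  unfolding nege0_def kq_mult_neg_left by (simp add: kq_mult_e0_left)

context mctx begin

definition Sa :: "'w \<Rightarrow> ('w, 'k) Fel set" where
  "Sa \<alpha> = {x \<in> F_carrier k. \<forall>r\<in>kq_carrier k. Lam k \<alpha> (msmul (Fmod k) x r) = 0}"

lemma Sa_sub: "is_submodule (KQ k) (Fmod k) (Sa \<alpha>)"
  unfolding is_submodule_def
proof (intro conjI ballI)
  show "Sa \<alpha> \<subseteq> mcarrier (Fmod k)" by (auto simp: Sa_def)
  show "mzero (Fmod k) \<in> Sa \<alpha>" by (simp add: Sa_def)
next
  fix x y assume x: "x \<in> Sa \<alpha>" and y: "y \<in> Sa \<alpha>"
  have xF: "x \<in> F_carrier k" and yF: "y \<in> F_carrier k" using x y by (auto simp: Sa_def)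
  have "Lam k \<alpha> (msmul (Fmod k) (madd (Fmod k) x y) r) = 0" if r: "r \<in> kq_carrier k" for r :: "path \<Rightarrow> 'k"
  proof -
    have "msmul (Fmod k) (madd (Fmod k) x y) r = (\<lambda>\<xi> n p. msmul (Fmod k) x r \<xi> n p + msmul (Fmod k) y r \<xi> n p)"
    proof -
      have "kq_mult k (\<lambda>p. x \<xi> n p + y \<xi> n p) r = (\<lambda>p. kq_mult k (x \<xi> n) r p + kq_mult k (y \<xi> n) r p)" for \<xi> n
        using kq_mult_add_left[OF F_carrierD(2)[OF xF] F_carrierD(2)[OF yF] r] unfolding kq_add_def .
      thus ?thesis unfolding Fmod_simps by (intro ext) simp
    qed
    moreover have "Lam k \<alpha> (\<lambda>\<xi> n p. msmul (Fmod k) x r \<xi> n p + msmul (Fmod k) y r \<xi> n p) = 0"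
      using Lam_add[OF F_smul_closed[OF xF r] F_smul_closed[OF yF r]] x y r unfolding Sa_def by simp
    ultimately show ?thesis by simp
  qed
  thus "madd (Fmod k) x y \<in> Sa \<alpha>" unfolding Sa_def using F_add_closed[OF xF yF] by simp
next
  fix x and r :: "path \<Rightarrow> 'k" assume x: "x \<in> Sa \<alpha>" and r: "r \<in> carrier (KQ k)"
  have xF: "x \<in> F_carrier k" using x by (auto simp: Sa_def)
  have r': "r \<in> kq_carrier k" using r by simp
  have "Lam k \<alpha> (msmul (Fmod k) (msmul (Fmod k) x r) r') = 0" if r2: "r' \<in> kq_carrier k" for r' :: "path \<Rightarrow> 'k"
  proof -
    have "msmul (Fmod k) (msmul (Fmod k) x r) r' = msmul (Fmod k) x (kq_mult k r r')"
      unfolding Fmod_simps kq_mult_assoc[OF F_carrierD(2)[OF xF] r' r2] ..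
    thus ?thesis using x kq_mult_closed[OF r' r2] unfolding Sa_def by simp
  qed
  thus "msmul (Fmod k) x r \<in> Sa \<alpha>" unfolding Sa_def using F_smul_closed[OF xF r'] by simp
qed

lemma lg_Sa:
  assumes a: "is_lim \<alpha>" and b: "is_lim \<beta>" and nl: "\<not> is_lim (\<zeta> \<beta> m)"
  shows "ladder_gen k \<zeta> \<beta> m \<in> Sa \<alpha>"
proof -
  have lF: "(ladder_gen k \<zeta> \<beta> m :: ('w, 'k) Fel) \<in> F_carrier k" by (rule F0_FD[OF ladder_gen_F0[OF b]])
  have ne: "\<zeta> \<beta> m \<noteq> \<alpha>" using a nl by auto
  have slot: "(ladder_gen k \<zeta> \<beta> m :: ('w, 'k) Fel) \<alpha> j = (if \<beta> = \<alpha> \<and> j = m then nege0 else if \<beta> = \<alpha> \<and> j = Suc m then kq_cycle k else (\<lambda>_. 0))" for j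
    unfolding ladder_gen_eq using ne by (auto simp: unitv_def nege0_def fun_eq_iff)
  have "Lam k \<alpha> (msmul (Fmod k) (ladder_gen k \<zeta> \<beta> m :: ('w, 'k) Fel) r) = 0" if r: "r \<in> kq_carrier k" for r :: "path \<Rightarrow> 'k"
  proof -
    have "Lam k \<alpha> (msmul (Fmod k) (ladder_gen k \<zeta> \<beta> m :: ('w, 'k) Fel) r) =
        (\<Sum>j\<in>{m, Suc m}. msmul (Fmod k) (ladder_gen k \<zeta> \<beta> m :: ('w, 'k) Fel) r \<alpha> j (cpow k j))"
      by (rule Lam_ext) (auto simp: slot split: if_splits)
    also have "\<dots> = (if \<beta> = \<alpha> then kq_mult k nege0 r (cpow k m) + kq_mult k (kq_cycle k) r (cpow k (Suc m)) else 0)"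
      by (simp add: slot)
    also have "\<dots> = 0" by (simp add: nege0_mult_cpow cycle_mult_cpow)
    finally show ?thesis .
  qed
  thus ?thesis unfolding Sa_def using lF by simp
qed

lemma I_Sa:
  assumes a: "is_lim \<alpha>" and nl: "\<And>\<beta> m. is_lim \<beta> \<Longrightarrow> \<not> is_lim (\<zeta> \<beta> m)"
  shows "I \<subseteq> Sa \<alpha>"
proof -
  have "G_sub k \<zeta> \<beta> \<subseteq> Sa \<alpha>" if b: "is_lim \<beta>" for \<beta>
    unfolding G_sub_def by (rule gen_sub_least[OF Sa_sub]) (use lg_Sa[OF a b nl[OF b]] in blast)
  thus ?thesis unfolding I_eq I_sub_def by (intro gen_sub_least[OF Sa_sub]) blast
qed

lemma Lam_I: "is_lim \<alpha> \<Longrightarrow> (\<And>\<beta> m. is_lim \<beta> \<Longrightarrow> \<not> is_lim (\<zeta> \<beta> m)) \<Longrightarrow> u \<in> I \<Longrightarrow> Lam k \<alpha> u = 0"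
proof -
  assume a: "is_lim \<alpha>" and nl: "\<And>\<beta> m. is_lim \<beta> \<Longrightarrow> \<not> is_lim (\<zeta> \<beta> m)" and u: "u \<in> I"
  have uS: "u \<in> Sa \<alpha>" using I_Sa[OF a nl] u by blast
  hence uF: "u \<in> F_carrier k" by (simp add: Sa_def)
  have "msmul (Fmod k) u (kq_one k) = u"
    unfolding Fmod_simps using kq_mult_one_right[OF F_carrierD(2)[OF uF]] by simp
  moreover have "\<forall>r\<in>kq_carrier k. Lam k \<alpha> (msmul (Fmod k) u r) = 0" using uS unfolding Sa_def by blast
  ultimately show ?thesis using kq_one_closed by metis
qed


lemma field_double_zero: "(a::'a::ab_group_add) = a + a \<Longrightarrow> a = 0" by (metis add_cancel_right_right)

lemma not_proj:
  assumes ladder: "ladder_system \<zeta>"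
    and nl: "\<And>\<beta> m. is_lim \<beta> \<Longrightarrow> \<not> is_lim (\<zeta> \<beta> m)"
    and club: "\<And>h :: 'w \<Rightarrow> 'w set. (\<And>\<gamma>. finite (h \<gamma>)) \<Longrightarrow> \<exists>\<alpha>. is_lim \<alpha> \<and> (\<forall>\<gamma><\<alpha>. \<forall>\<xi>\<in>h \<gamma>. \<xi> < \<alpha>)"
  shows "\<not> projective TYPE(('w, 'k) Fel) (KQ k :: (path \<Rightarrow> 'k) ring) M"
proof
  assume proj: "projective TYPE(('w, 'k) Fel) (KQ k :: (path \<Rightarrow> 'k) ring) M"
  let ?E = "submod (Fmod k) (F0 k) :: (('w, 'k) Fel, path \<Rightarrow> 'k) rmod"
  have Emod: "right_module (KQ k) ?E" by (rule F0_module)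
  have chom: "rmod_hom (KQ k) ?E M cs"
    unfolding rmod_hom_def submod_simps M_ops M_carrier_eq
  proof (intro conjI ballI)
    fix x y :: "('w, 'k) Fel" assume x: "x \<in> F0 k" and y: "y \<in> F0 k"
    show "cs (madd (Fmod k) x y) = madd Q (cs x) (cs y)"
      using Q_add[OF F0_FD[OF x] F0_FD[OF y]] by simp
  next
    fix x :: "('w, 'k) Fel" and r :: "path \<Rightarrow> 'k" assume x: "x \<in> F0 k" and r: "r \<in> carrier (KQ k)"
    show "cs (msmul (Fmod k) x r) = msmul Q (cs x) r"
      using Q_smul[OF F0_FD[OF x]] r by simp
  qed auto
  have csurj: "cs ` mcarrier ?E = mcarrier M" unfolding submod_simps M_carrier_eq ..
  obtain s where shom: "rmod_hom (KQ k) M ?E s" and ssec: "\<forall>m\<in>mcarrier M. cs (s m) = m"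
    using proj Emod chom csurj unfolding projective_def by blast
  have sF0: "s m \<in> F0 k" if "m \<in> mcarrier M" for m
    using shom that unfolding rmod_hom_def submod_simps by blast
  have sadd: "s (madd Q a b) = madd (Fmod k) (s a) (s b)" if "a \<in> mcarrier M" "b \<in> mcarrier M" for a b
    using shom that unfolding rmod_hom_def submod_simps M_ops by blast
  have ssmul: "s (msmul Q a r) = msmul (Fmod k) (s a) r" if "a \<in> mcarrier M" "r \<in> kq_carrier k" for a and r :: "path \<Rightarrow> 'k"
    using shom that unfolding rmod_hom_def submod_simps M_ops KQ_simps by blast
  have s0: "s (cs (\<lambda>_ _ _. 0)) = (\<lambda>_ _ _. 0)"
  proof -
    have z: "cs (\<lambda>_ _ _. 0) \<in> mcarrier M" using M_zero unfolding Q_zero .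
    have "madd Q (cs (\<lambda>_ _ _. 0)) (cs (\<lambda>_ _ _. 0)) = cs (\<lambda>_ _ _. 0)"
      using Q_add[OF F_zero_closed F_zero_closed] by simp
    hence H: "s (cs (\<lambda>_ _ _. 0)) = (\<lambda>\<xi> n p. s (cs (\<lambda>_ _ _. 0)) \<xi> n p + s (cs (\<lambda>_ _ _. 0)) \<xi> n p)"
      using sadd[OF z z] by simp
    have D: "s (cs (\<lambda>_ _ _. 0)) \<xi> n p = s (cs (\<lambda>_ _ _. 0)) \<xi> n p + s (cs (\<lambda>_ _ _. 0)) \<xi> n p" for \<xi> n p
      using arg_cong[where f="\<lambda>F. F \<xi> n p", OF H] by (simp only:)
    show ?thesis by (intro ext) (rule field_double_zero[OF D])
  qed
  define g where "g \<xi> n = cs (unitv \<xi> n kq_e0)" for \<xi> :: 'w and n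
  have gM: "g \<xi> n \<in> mcarrier M" if "valid \<xi> n" for \<xi> n
    unfolding g_def M_carrier_eq using unitv_F0[OF kq_e0_closed that e0_fz] by blast
  define \<sigma> where "\<sigma> \<xi> n = s (g \<xi> n)" for \<xi> n
  have \<sigma>F: "\<sigma> \<xi> n \<in> F_carrier k" if "valid \<xi> n" for \<xi> n
    unfolding \<sigma>_def by (rule F0_FD[OF sF0[OF gM[OF that]]])
  define h where "h \<gamma> = (if is_lim \<gamma> then {} else {\<xi>. \<exists>m. \<sigma> \<gamma> 0 \<xi> m \<noteq> (\<lambda>_. 0)})" for \<gamma>
  have hfin: "finite (h \<gamma>)" for \<gamma>
  proof (cases "is_lim \<gamma>")
    case False
    hence "valid \<gamma> 0" by (simp add: valid_def)
    have "{\<xi>. \<exists>m. \<sigma> \<gamma> 0 \<xi> m \<noteq> (\<lambda>_. 0)} \<subseteq> fst ` {(\<xi>, n). \<sigma> \<gamma> 0 \<xi> n \<noteq> (\<lambda>_. 0)}"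
      by (auto simp: image_iff)
    moreover have "finite {(\<xi>, n). \<sigma> \<gamma> 0 \<xi> n \<noteq> (\<lambda>_. 0)}" by (rule F_carrierD(1)[OF \<sigma>F[OF \<open>valid \<gamma> 0\<close>]])
    ultimately show ?thesis using False unfolding h_def by (simp add: finite_subset)
  qed (simp add: h_def)
  obtain \<alpha> where a: "is_lim \<alpha>" and aclub: "\<forall>\<gamma><\<alpha>. \<forall>\<xi>\<in>h \<gamma>. \<xi> < \<alpha>" using club[of h, OF hfin] by blast
  have zlt: "\<zeta> \<alpha> n < \<alpha>" for n using ladder a unfolding ladder_system_def by blast
  have sz0: "\<sigma> (\<zeta> \<alpha> n) 0 \<alpha> m = (\<lambda>_. 0)" for n m
  proof (rule ccontr)
    assume "\<sigma> (\<zeta> \<alpha> n) 0 \<alpha> m \<noteq> (\<lambda>_. 0)"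
    hence "\<alpha> \<in> h (\<zeta> \<alpha> n)" unfolding h_def using nl[OF a] by auto
    thus False using aclub zlt[of n] by blast
  qed
  have va: "valid \<alpha> n" for n using a by (simp add: valid_def)
  have vz: "valid (\<zeta> \<alpha> n) 0" for n by (simp add: valid_def)
    have rel: "kq_mult k (\<sigma> \<alpha> n \<alpha> m) kq_e0 = kq_mult k (\<sigma> \<alpha> (Suc n) \<alpha> m) (kq_cycle k)" for n m
  proof -
    have "msmul Q (g \<alpha> n) nege0 = cs (msmul (Fmod k) (unitv \<alpha> n kq_e0) nege0)"
      unfolding g_def Fmod_simps by (rule Q_smul[OF unitv_F[OF kq_e0_closed va] nege0_closed])
    also have "\<dots> = cs (unitv \<alpha> n nege0)" unfolding unitv_smul e0_mult_fz[OF nege0_fz] ..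
    finally have g1: "msmul Q (g \<alpha> n) nege0 = cs (unitv \<alpha> n nege0)" .
    have "msmul Q (g \<alpha> (Suc n)) (kq_cycle k) = cs (msmul (Fmod k) (unitv \<alpha> (Suc n) kq_e0) (kq_cycle k))"
      unfolding g_def Fmod_simps by (rule Q_smul[OF unitv_F[OF kq_e0_closed va] kq_cycle_closed])
    also have "\<dots> = cs (unitv \<alpha> (Suc n) (kq_cycle k))" unfolding unitv_smul e0_cycle ..
    finally have g2: "msmul Q (g \<alpha> (Suc n)) (kq_cycle k) = cs (unitv \<alpha> (Suc n) (kq_cycle k))" .
    have M1: "msmul Q (g \<alpha> n) nege0 \<in> mcarrier M" by (rule M_smul[OF gM[OF va] nege0_closed])
    have M2: "msmul Q (g \<alpha> (Suc n)) (kq_cycle k) \<in> mcarrier M" by (rule M_smul[OF gM[OF va] kq_cycle_closed])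
    have M3: "madd Q (g (\<zeta> \<alpha> n) 0) (msmul Q (g \<alpha> n) nege0) \<in> mcarrier M" by (rule M_add[OF gM[OF vz] M1])
    have "madd Q (madd Q (g (\<zeta> \<alpha> n) 0) (msmul Q (g \<alpha> n) nege0)) (msmul Q (g \<alpha> (Suc n)) (kq_cycle k))
        = cs (ladder_gen k \<zeta> \<alpha> n)"
      unfolding g1 g2 unfolding g_def ladder_gen_eq nege0_def[symmetric]
      using Q_add[OF unitv_F[OF kq_e0_closed vz] unitv_F[OF nege0_closed va]]
        Q_add[OF F_add_closed[OF unitv_F[OF kq_e0_closed vz] unitv_F[OF nege0_closed va]] unitv_F[OF kq_cycle_closed va]]
      by simp
    also have "\<dots> = cs (\<lambda>_ _ _. 0)" by (rule cs_I[OF ladder_gen_I[OF a]])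
    finally have eq: "madd Q (madd Q (g (\<zeta> \<alpha> n) 0) (msmul Q (g \<alpha> n) nege0)) (msmul Q (g \<alpha> (Suc n)) (kq_cycle k)) = cs (\<lambda>_ _ _. 0)" .
    have "s (madd Q (madd Q (g (\<zeta> \<alpha> n) 0) (msmul Q (g \<alpha> n) nege0)) (msmul Q (g \<alpha> (Suc n)) (kq_cycle k)))
       = madd (Fmod k) (madd (Fmod k) (\<sigma> (\<zeta> \<alpha> n) 0) (msmul (Fmod k) (\<sigma> \<alpha> n) nege0)) (msmul (Fmod k) (\<sigma> \<alpha> (Suc n)) (kq_cycle k))"
      unfolding sadd[OF M3 M2] sadd[OF gM[OF vz] M1] ssmul[OF gM[OF va] nege0_closed] ssmul[OF gM[OF va] kq_cycle_closed] \<sigma>_def ..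
    hence E0: "madd (Fmod k) (madd (Fmod k) (\<sigma> (\<zeta> \<alpha> n) 0) (msmul (Fmod k) (\<sigma> \<alpha> n) nege0)) (msmul (Fmod k) (\<sigma> \<alpha> (Suc n)) (kq_cycle k)) = (\<lambda>_ _ _. 0)"
      unfolding eq s0 by simp
    have "\<sigma> (\<zeta> \<alpha> n) 0 \<alpha> m p + kq_mult k (\<sigma> \<alpha> n \<alpha> m) nege0 p + kq_mult k (\<sigma> \<alpha> (Suc n) \<alpha> m) (kq_cycle k) p = 0" for p
      using fun_cong[OF fun_cong[OF fun_cong[OF E0, of \<alpha>], of m], of p] by simp
    hence "- kq_mult k (\<sigma> \<alpha> n \<alpha> m) kq_e0 p + kq_mult k (\<sigma> \<alpha> (Suc n) \<alpha> m) (kq_cycle k) p = 0" for p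
      using sz0[of n m] unfolding nege0_def kq_mult_neg_right by simp
    thus ?thesis by (intro ext) (simp add: add_eq_0_iff neg_equal_iff_equal eq_neg_iff_add_eq_0 algebra_simps)
  qed
  have \<sigma>c: "\<sigma> \<alpha> n \<alpha> m \<in> kq_carrier k" for n m by (rule F_carrierD(2)[OF \<sigma>F[OF va]])
  have w0: "kq_mult k (\<sigma> \<alpha> 0 \<alpha> m) kq_e0 = (\<lambda>_. 0)" for m
  proof -
    define w where "w n = kq_mult k (\<sigma> \<alpha> n \<alpha> m) kq_e0" for n
    have "w n = kq_mult k (w (Suc n)) (kq_cycle k)" for n
    proof -
      have "w n = kq_mult k (\<sigma> \<alpha> (Suc n) \<alpha> m) (kq_mult k kq_e0 (kq_cycle k))" unfolding w_def rel e0_cycle ..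
      also have "\<dots> = kq_mult k (w (Suc n)) (kq_cycle k)"
        unfolding w_def kq_mult_assoc[OF \<sigma>c kq_e0_closed kq_cycle_closed] ..
      finally show ?thesis .
    qed
    hence "w 0 = (\<lambda>_. 0)" by (rule cyc_descent)
    thus ?thesis by (simp add: w_def)
  qed
  have L0: "Lam k \<alpha> (\<sigma> \<alpha> 0) = 0"
  proof -
    have "\<sigma> \<alpha> 0 \<alpha> m (cpow k m) = 0" for m
      using fun_cong[OF w0[of m], of "cpow k m"] by (simp add: kq_mult_e0_right ptgt_cpow)
    thus ?thesis unfolding Lam_def by simp
  qed
  have "cs (\<sigma> \<alpha> 0) = cs (unitv \<alpha> 0 kq_e0)" using ssec gM[OF va] unfolding \<sigma>_def g_def by blast
  then obtain u where u: "u \<in> I" "\<sigma> \<alpha> 0 = (\<lambda>\<xi> n p. unitv \<alpha> 0 kq_e0 \<xi> n p + u \<xi> n p)" using cs_eqD by blast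
  have "Lam k \<alpha> (\<sigma> \<alpha> 0) = Lam k \<alpha> (unitv \<alpha> 0 kq_e0) + Lam k \<alpha> u"
    unfolding u(2) by (rule Lam_add[OF unitv_F[OF kq_e0_closed va]]) (use u(1) I_F in blast)
  also have "Lam k \<alpha> u = 0" by (rule Lam_I[OF a nl u(1)])
  also have "Lam k \<alpha> (unitv \<alpha> 0 kq_e0) = 1"
  proof -
    have "Lam k \<alpha> (unitv \<alpha> 0 kq_e0) = (\<Sum>m\<in>{0}. unitv \<alpha> 0 kq_e0 \<alpha> m (cpow k m))"
      by (rule Lam_ext) (auto simp: unitv_def split: if_splits)
    thus ?thesis by (simp add: unitv_def kq_e0_def cpow_def)
  qed
  finally show False using L0 by simp
qed

end


lemma countable_le: "countable {y::'w::wellorder. y \<le> x}"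
  if "omega1_type TYPE('w)"
proof -
  have "{y. y \<le> x} = {y. y < x} \<union> {x}" by auto
  thus ?thesis using that unfolding omega1_type_def by auto
qed

lemma countable_bounded:
  assumes o: "omega1_type TYPE('w::wellorder)" and S: "countable (S :: 'w set)"
  shows "\<exists>b. \<forall>x\<in>S. x < b"
proof (rule ccontr)
  assume "\<not> ?thesis"
  hence "\<forall>b. \<exists>x\<in>S. b \<le> x" by (auto simp: not_less)
  hence "UNIV \<subseteq> (\<Union>x\<in>S. {y. y \<le> x})" by blast
  moreover have "countable (\<Union>x\<in>S. {y. y \<le> x})" using S countable_le[OF o] by auto
  ultimately have "countable (UNIV :: 'w set)" using countable_subset by blast
  thus False using o unfolding omega1_type_def by blast
qed

lemma no_max: "omega1_type TYPE('w::wellorder) \<Longrightarrow> \<exists>y. (x::'w) < y"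
  using countable_bounded[of "{x}"] by auto

lemma osucc_gt: "omega1_type TYPE('w::wellorder) \<Longrightarrow> (x::'w) < osucc x"
  unfolding osucc_def using no_max by (metis LeastI_ex)

lemma osucc_least: "(x::'w::wellorder) < y \<Longrightarrow> osucc x \<le> y"
  unfolding osucc_def by (rule Least_le)

lemma osucc_not_lim: "omega1_type TYPE('w::wellorder) \<Longrightarrow> \<not> is_lim (osucc (x::'w))"
proof
  assume o: "omega1_type TYPE('w)" and l: "is_lim (osucc x)"
  then obtain \<gamma> where "x < \<gamma>" "\<gamma> < osucc x" using osucc_gt[OF o, of x] unfolding is_lim_def by blast
  thus False using osucc_least[of x \<gamma>] by simp
qed

lemma good_ladder_nonlim:
  "omega1_type TYPE('w::wellorder) \<Longrightarrow> good_ladder (\<zeta> :: 'w \<Rightarrow> nat \<Rightarrow> 'w) \<Longrightarrow> is_lim \<alpha> \<Longrightarrow> \<not> is_lim (\<zeta> \<alpha> n)"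
proof -
  assume o: "omega1_type TYPE('w)" and g: "good_ladder \<zeta>" and a: "is_lim \<alpha>"
  then obtain \<delta> where "\<zeta> \<alpha> n = (osucc ^^ Suc n) \<delta>" unfolding good_ladder_def by blast
  hence "\<zeta> \<alpha> n = osucc ((osucc ^^ n) \<delta>)" by simp
  thus ?thesis using osucc_not_lim[OF o] by simp
qed

lemma club:
  assumes o: "omega1_type TYPE('w::wellorder)" and h: "\<And>\<gamma>. finite (h \<gamma> :: 'w set)"
  shows "\<exists>\<alpha>::'w. is_lim \<alpha> \<and> (\<forall>\<gamma><\<alpha>. \<forall>\<xi>\<in>h \<gamma>. \<xi> < \<alpha>)"
proof -
  define nx where "nx \<beta> = (SOME b. \<beta> < b \<and> (\<forall>\<gamma>\<le>\<beta>. \<forall>\<xi>\<in>h \<gamma>. \<xi> < b))" for \<beta> :: 'w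
  have nx: "\<beta> < nx \<beta> \<and> (\<forall>\<gamma>\<le>\<beta>. \<forall>\<xi>\<in>h \<gamma>. \<xi> < nx \<beta>)" for \<beta>
  proof -
    have "countable (insert \<beta> (\<Union>\<gamma>\<in>{\<gamma>. \<gamma> \<le> \<beta>}. h \<gamma>))"
      using countable_le[OF o, of \<beta>] h countable_finite by blast
    then obtain b where "\<forall>x\<in>insert \<beta> (\<Union>\<gamma>\<in>{\<gamma>. \<gamma> \<le> \<beta>}. h \<gamma>). x < b" using countable_bounded[OF o] by blast
    hence "\<beta> < b \<and> (\<forall>\<gamma>\<le>\<beta>. \<forall>\<xi>\<in>h \<gamma>. \<xi> < b)" by blast
    thus ?thesis unfolding nx_def by (rule someI)
  qed
  define sq where "sq j = (nx ^^ j) undefined" for j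
  have sqS: "sq (Suc j) = nx (sq j)" for j by (simp add: sq_def)
  obtain b where "\<forall>x\<in>range sq. x < b" using countable_bounded[OF o, of "range sq"] by blast
  hence ex: "\<exists>b. \<forall>j. sq j < b" by blast
  define \<alpha> where "\<alpha> = (LEAST b. \<forall>j. sq j < b)"
  have lt: "sq j < \<alpha>" for j unfolding \<alpha>_def using LeastI_ex[OF ex] by blast
  have below: "\<exists>j. \<beta> \<le> sq j" if "\<beta> < \<alpha>" for \<beta>
  proof (rule ccontr)
    assume "\<not> ?thesis"
    hence "\<forall>j. sq j < \<beta>" by (auto simp: not_le)
    hence "\<alpha> \<le> \<beta>" unfolding \<alpha>_def by (rule Least_le)
    thus False using that by simp
  qed
  have "is_lim \<alpha>" unfolding is_lim_def
  proof (intro conjI allI impI)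
    show "\<exists>\<beta>. \<beta> < \<alpha>" using lt by blast
    fix \<beta> assume "\<beta> < \<alpha>"
    then obtain j where "\<beta> \<le> sq j" using below by blast
    thus "\<exists>\<gamma>. \<beta> < \<gamma> \<and> \<gamma> < \<alpha>" using nx[of "sq j"] lt[of "Suc j"] sqS[of j]
      by (metis order.strict_trans1)
  qed
  moreover have "\<forall>\<gamma><\<alpha>. \<forall>\<xi>\<in>h \<gamma>. \<xi> < \<alpha>"
  proof (intro allI impI ballI)
    fix \<gamma> \<xi> assume g: "\<gamma> < \<alpha>" and x: "\<xi> \<in> h \<gamma>"
    then obtain j where "\<gamma> \<le> sq j" using below by blast
    hence "\<xi> < nx (sq j)" using nx[of "sq j"] x by blast
    thus "\<xi> < \<alpha>" using lt[of "Suc j"] sqS[of j] by simp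
  qed
  ultimately show ?thesis by blast
qed

lemma countable_kq:
  assumes c: "countable (UNIV :: 'k::field set)"
  shows "countable (kq_carrier k :: (path \<Rightarrow> 'k) set)"
proof -
  define gr where "gr X = {(p, X p) | p. X p \<noteq> 0}" for X :: "path \<Rightarrow> 'k"
  have cU: "countable (UNIV :: (path \<times> 'k) set)"
  proof -
    have "countable (SIGMA p:(UNIV :: path set). (UNIV :: 'k set))" using c by (intro countable_SIGMA) auto
    thus ?thesis by (simp add: UNIV_Times_UNIV[symmetric] del: UNIV_Times_UNIV)
  qed
  have "gr ` kq_carrier k \<subseteq> {A. finite A \<and> A \<subseteq> UNIV}"
  proof
    fix A assume "A \<in> gr ` kq_carrier k"
    then obtain X where X: "X \<in> kq_carrier k" "A = gr X" by blast
    have "gr X = (\<lambda>p. (p, X p)) ` {p. X p \<noteq> 0}" unfolding gr_def by auto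
    thus "A \<in> {A. finite A \<and> A \<subseteq> UNIV}" using kq_carrierD(1)[OF X(1)] X(2) by auto
  qed
  hence "countable (gr ` kq_carrier k)"
    using countable_Collect_finite_subset[OF cU] countable_subset by blast
  moreover have "inj_on gr (kq_carrier k)"
  proof (rule inj_onI)
    fix X Y assume "gr X = gr Y"
    hence e: "(p, v) \<in> gr X \<longleftrightarrow> (p, v) \<in> gr Y" for p v by simp
    have m: "(p, v) \<in> gr Z \<longleftrightarrow> v = Z p \<and> Z p \<noteq> 0" for Z p v unfolding gr_def by (cases p) auto
    show "X = Y"
    proof (rule ext)
      fix p show "X p = Y p"
        using e[of p "X p"] e[of p "Y p"] unfolding m by auto
    qed
  qed
  ultimately show ?thesis by (rule countable_image_inj_on)
qed


lemma KQmod_carrier[simp]: "mcarrier (KQmod k) = kq_carrier k" by (simp add: KQmod_def)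

theorem theorem2p8:
  fixes k :: nat and \<zeta> :: "'w::wellorder \<Rightarrow> nat \<Rightarrow> 'w"
  assumes "countable (UNIV :: 'k::field set)"
    and "\<forall>p :: 'k poly. degree p > 0 \<longrightarrow> (\<exists>x. poly p x = 0)"
    and "omega1_type TYPE('w)"
    and "good_ladder \<zeta>"
    and "UP TYPE('w)"
  shows "ext1_zero TYPE('e) (KQ k :: (path \<Rightarrow> 'k) ring) (M_omega1 k \<zeta>) (KQmod k)
         \<and> \<not> projective TYPE(('w, 'k) Fel) (KQ k :: (path \<Rightarrow> 'k) ring) (M_omega1 k \<zeta>)"
proof -
  note cK = assms(1) and o = assms(3) and g = assms(4) and up = assms(5)
  have ladder: "ladder_system \<zeta>" using g unfolding good_ladder_def by blast
  have nl: "\<And>\<alpha> n. is_lim \<alpha> \<Longrightarrow> \<not> is_lim (\<zeta> \<alpha> n)" using good_ladder_nonlim[OF o g] by blast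
  interpret mc: mctx k \<zeta> "I_sub k \<zeta> :: ('w, 'k) Fel set" by unfold_locales (rule refl)
  have part2: "\<not> projective TYPE(('w, 'k) Fel) (KQ k :: (path \<Rightarrow> 'k) ring) (M_omega1 k \<zeta>)"
    by (rule mc.not_proj[OF ladder nl club[OF o]])
  have cKQ: "countable (kq_carrier k :: (path \<Rightarrow> 'k) set)" by (rule countable_kq[OF cK])
  have part1: "ext1_zero TYPE('e) (KQ k :: (path \<Rightarrow> 'k) ring) (M_omega1 k \<zeta>) (KQmod k)"
    unfolding ext1_zero_def
  proof (intro allI impI, elim conjE)
    fix E :: "('e, path \<Rightarrow> 'k) rmod" and i :: "(path \<Rightarrow> 'k) \<Rightarrow> 'e" and p :: "'e \<Rightarrow> ('w, 'k) Fel set"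
    assume h1: "right_module (KQ k) E" and h2: "rmod_hom (KQ k) (KQmod k) E i"
      and h3: "rmod_hom (KQ k) E (M_omega1 k \<zeta>) p" and h4: "inj_on i (mcarrier (KQmod k))"
      and h5: "p ` mcarrier E = mcarrier (M_omega1 k \<zeta>)"
      and h6: "\<forall>x\<in>mcarrier E. (p x = mzero (M_omega1 k \<zeta>)) = (x \<in> i ` mcarrier (KQmod k))"
    interpret ex: extctx k \<zeta> "I_sub k \<zeta> :: ('w, 'k) Fel set" E i p
      by unfold_locales (use h1 h2 h3 h4 h5 h6 in simp_all)
    define d where "d \<alpha> n = to_nat_on (kq_carrier k :: (path \<Rightarrow> 'k) set) (ex.rr \<alpha> n)" for \<alpha> n
    have H: "\<forall>(X::'w \<Rightarrow> nat set) (\<zeta>::'w \<Rightarrow> nat \<Rightarrow> 'w) (d::'w \<Rightarrow> nat \<Rightarrow> nat).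
      ladder_system \<zeta> \<and> (\<forall>\<alpha> n. is_lim \<alpha> \<longrightarrow> d \<alpha> n \<in> X (\<zeta> \<alpha> n)) \<longrightarrow>
      (\<exists>f::'w \<Rightarrow> nat. \<forall>\<alpha>. is_lim \<alpha> \<longrightarrow> finite {n. f (\<zeta> \<alpha> n) \<noteq> d \<alpha> n})"
      using up unfolding UP_def .
    have "ladder_system \<zeta> \<and> (\<forall>\<alpha> n. is_lim \<alpha> \<longrightarrow> d \<alpha> n \<in> (\<lambda>_. UNIV) (\<zeta> \<alpha> n))"
      using ladder by simp
    with spec[OF spec[OF spec[OF H, of "\<lambda>_. UNIV"], of \<zeta>], of d]
    obtain f' :: "'w \<Rightarrow> nat" where f': "\<forall>\<alpha>. is_lim \<alpha> \<longrightarrow> finite {n. f' (\<zeta> \<alpha> n) \<noteq> d \<alpha> n}"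
      by blast
    define f where "f \<gamma> = from_nat_into (kq_carrier k :: (path \<Rightarrow> 'k) set) (f' \<gamma>)" for \<gamma>
    have fc: "f \<gamma> \<in> kq_carrier k" for \<gamma>
      unfolding f_def by (rule from_nat_into) (use kq_zero_closed in blast)
    define N where "N \<alpha> = (SOME m. \<forall>n\<in>{n. f' (\<zeta> \<alpha> n) \<noteq> d \<alpha> n}. n < m)" for \<alpha>
    have N: "f (\<zeta> \<alpha> n) = ex.rr \<alpha> n" if a: "is_lim \<alpha>" and n: "N \<alpha> \<le> n" for \<alpha> n
    proof -
      have "\<exists>m. \<forall>n\<in>{n. f' (\<zeta> \<alpha> n) \<noteq> d \<alpha> n}. n < m"
        using f' a finite_nat_set_iff_bounded by blast
      hence "\<forall>n\<in>{n. f' (\<zeta> \<alpha> n) \<noteq> d \<alpha> n}. n < N \<alpha>" unfolding N_def by (rule someI_ex)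
      hence "f' (\<zeta> \<alpha> n) = d \<alpha> n" using n by auto
      thus ?thesis unfolding f_def d_def using cKQ conjunct1[OF ex.rr_prop[OF a, of n]] by simp
    qed
    obtain y where y: "ex.good y" using ex.exists_good[OF nl fc N] by blast
    show "\<exists>s. rmod_hom (KQ k) (M_omega1 k \<zeta>) E s \<and> (\<forall>m\<in>mcarrier (M_omega1 k \<zeta>). p (s m) = m)"
      using ex.split_ok[OF y] by blast
  qed
  show ?thesis using part1 part2 by blast
qed


end
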